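(* Let $A$ be a finite-vertex graph and $\mathsf V$ a pseudovariety of semigroups containing $B_2$. If the multiplication in $\overline{\Omega}_{E(A)}\mathsf V$ is an open mapping, then the multiplication in $\overline{\Omega}_A g\mathsf V$ is also an open mapping.
   Context: A graph $A$ consists of vertices $V(A)$, edges $E(A)$, source and range maps $\alpha,\omega$; finite-vertex means $V(A)$ finite. Semigroupoids are graphs with an associative partial multiplication defined on $D(S)=\{(s,t):\alpha(s)=\omega(t)\}$. $g\mathsf V$ is the smallest pseudovariety of semigroupoids (classes of finite semigroupoids closed under divisors, finite direct products and finite coproducts) containing $\mathsf V$. $\overline{\Omega}_A g\mathsf V$ is the free pro-$g\mathsf V$ semigroupoid over $A$ and $\overline{\Omega}_{E(A)}\mathsf V$ the free pro-$\mathsf V$ semigroup over the set $E(A)$. $B_2$ is the aperiodic Brandt semigroup on $(Q\times Q)\cup\{0\}$ with $|Q|=2$, $0$ a zero, $(p,r)(s,q)=0$ if $r\ne s$ and $(p,r)(r,q)=(p,q)$. Multiplication in $S$ is open if the map $D(S)\to E(S)$ sends open sets to open sets. *)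

theory Defs
  imports "HOL-Analysis.Analysis"
begin

type_synonym 'a sg = "'a set \<times> ('a \<Rightarrow> 'a \<Rightarrow> 'a)"

definition fin_sg :: "'a sg \<Rightarrow> bool" where
  "fin_sg S \<longleftrightarrow> finite (fst S) \<and> fst S \<noteq> {} \<and>
     (\<forall>x\<in>fst S. \<forall>y\<in>fst S. snd S x y \<in> fst S) \<and>
     (\<forall>x\<in>fst S. \<forall>y\<in>fst S. \<forall>z\<in>fst S. snd S (snd S x y) z = snd S x (snd S y z))"

definition sg_hom_on :: "'a set \<Rightarrow> ('a \<Rightarrow> 'a \<Rightarrow> 'a) \<Rightarrow> 'b sg \<Rightarrow> ('a \<Rightarrow> 'b) \<Rightarrow> bool" where
  "sg_hom_on U m T h \<longleftrightarrow> (\<forall>x\<in>U. h x \<in> fst T) \<and>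
     (\<forall>x\<in>U. \<forall>y\<in>U. h (m x y) = snd T (h x) (h y))"

definition sg_hom :: "'a sg \<Rightarrow> 'b sg \<Rightarrow> ('a \<Rightarrow> 'b) \<Rightarrow> bool" where
  "sg_hom S T h \<longleftrightarrow> sg_hom_on (fst S) (snd S) T h"

definition sg_iso :: "'a sg \<Rightarrow> 'b sg \<Rightarrow> bool" where
  "sg_iso S T \<longleftrightarrow> (\<exists>h. bij_betw h (fst S) (fst T) \<and> sg_hom S T h)"

definition sg_divides :: "'a sg \<Rightarrow> 'b sg \<Rightarrow> bool" where
  "sg_divides S T \<longleftrightarrow> (\<exists>U h. U \<subseteq> fst T \<and> U \<noteq> {} \<and> (\<forall>x\<in>U. \<forall>y\<in>U. snd T x y \<in> U) \<and>
      sg_hom_on U (snd T) S h \<and> h ` U = fst S)"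

definition sg_prod :: "'a sg \<Rightarrow> 'b sg \<Rightarrow> ('a \<times> 'b) sg" where
  "sg_prod S T = (fst S \<times> fst T, \<lambda>(a, b) (c, d). (snd S a c, snd T b d))"

definition sg_trivial :: "nat sg" where
  "sg_trivial = ({0}, \<lambda>_ _. 0)"

text \<open>A pseudovariety of semigroups, as a class of finite semigroups with carriers in nat
  (every finite semigroup is isomorphic to such a one): closed under divisors and finite
  direct products (including the empty product, the trivial semigroup).\<close>
definition sg_pvar :: "nat sg set \<Rightarrow> bool" where
  "sg_pvar V \<longleftrightarrow> (\<forall>S\<in>V. fin_sg S) \<and> sg_trivial \<in> V \<and>
     (\<forall>S T. fin_sg S \<and> T \<in> V \<and> sg_divides S T \<longrightarrow> S \<in> V) \<and>
     (\<forall>P S T. fin_sg P \<and> S \<in> V \<and> T \<in> V \<and> sg_iso P (sg_prod S T) \<longrightarrow> P \<in> V)"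

text \<open>The aperiodic Brandt semigroup B2 on (Q x Q) + {0}, Q = bool, None = 0.\<close>
definition B2 :: "(bool \<times> bool) option sg" where
  "B2 = (UNIV, \<lambda>x y. case (x, y) of
            (Some (p, r), Some (s, q)) \<Rightarrow> (if r = s then Some (p, q) else None)
          | _ \<Rightarrow> None)"

definition contains_B2 :: "nat sg set \<Rightarrow> bool" where
  "contains_B2 V \<longleftrightarrow> (\<exists>S\<in>V. sg_iso S B2)"

inductive_set sg_gen :: "('a \<Rightarrow> 'a \<Rightarrow> 'a) \<Rightarrow> 'a set \<Rightarrow> 'a set" for m X where
  base: "x \<in> X \<Longrightarrow> x \<in> sg_gen m X"
| mult: "a \<in> sg_gen m X \<Longrightarrow> b \<in> sg_gen m X \<Longrightarrow> m a b \<in> sg_gen m X"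

text \<open>Realised as the inverse limit: families indexed by all valuations
  (S, phi), S in V, phi : X -> S, compatible with all homomorphisms commuting with the
  valuations, and lying in the subsemigroup generated by phi(X).  Non-valuation indices are
  normalised to 0.\<close>

definition sg_val :: "nat sg set \<Rightarrow> 'x set \<Rightarrow> nat sg \<times> ('x \<Rightarrow> nat) \<Rightarrow> bool" where
  "sg_val V X v \<longleftrightarrow> fst v \<in> V \<and> snd v ` X \<subseteq> fst (fst v)"

definition free_sg :: "nat sg set \<Rightarrow> 'x set \<Rightarrow> (nat sg \<times> ('x \<Rightarrow> nat) \<Rightarrow> nat) set" where
  "free_sg V X = {w.
     (\<forall>v. sg_val V X v \<longrightarrow> w v \<in> sg_gen (snd (fst v)) (snd v ` X)) \<and>
     (\<forall>v. \<not> sg_val V X v \<longrightarrow> w v = 0) \<and>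
     (\<forall>S \<phi> T \<psi> h. sg_val V X (S, \<phi>) \<and> sg_val V X (T, \<psi>) \<and> sg_hom S T h \<and>
        (\<forall>x\<in>X. h (\<phi> x) = \<psi> x) \<longrightarrow> h (w (S, \<phi>)) = w (T, \<psi>))}"

text \<open>Profinite topology: initial topology for the projections to the (discrete) finite
  semigroups.\<close>
definition free_sg_top :: "nat sg set \<Rightarrow> 'x set \<Rightarrow> (nat sg \<times> ('x \<Rightarrow> nat) \<Rightarrow> nat) topology" where
  "free_sg_top V X = topology_generated_by
     (insert (free_sg V X) {{w \<in> free_sg V X. w v = n} | v n. True})"

definition free_sg_mul :: "nat sg set \<Rightarrow> 'x set \<Rightarrow> (nat sg \<times> ('x \<Rightarrow> nat) \<Rightarrow> nat)
     \<Rightarrow> (nat sg \<times> ('x \<Rightarrow> nat) \<Rightarrow> nat) \<Rightarrow> (nat sg \<times> ('x \<Rightarrow> nat) \<Rightarrow> nat)" where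
  "free_sg_mul V X u w = (\<lambda>v. if sg_val V X v then snd (fst v) (u v) (w v) else 0)"

definition free_sg_mult_open :: "nat sg set \<Rightarrow> 'x set \<Rightarrow> bool" where
  "free_sg_mult_open V X \<longleftrightarrow>
     open_map (prod_topology (free_sg_top V X) (free_sg_top V X)) (free_sg_top V X)
              (\<lambda>(u, w). free_sg_mul V X u w)"

record ('v, 'e) sgraph =
  verts :: "'v set"
  edges :: "'e set"
  src :: "'e \<Rightarrow> 'v"
  tgt :: "'e \<Rightarrow> 'v"

record ('v, 'e) sgd = "('v, 'e) sgraph" +
  mul :: "'e \<Rightarrow> 'e \<Rightarrow> 'e"

definition is_graph :: "('v, 'e, 'z) sgraph_scheme \<Rightarrow> bool" where
  "is_graph G \<longleftrightarrow> (\<forall>e\<in>edges G. src G e \<in> verts G \<and> tgt G e \<in> verts G)"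

definition is_sgd :: "('v, 'e) sgd \<Rightarrow> bool" where
  "is_sgd S \<longleftrightarrow> is_graph S \<and>
     (\<forall>s\<in>edges S. \<forall>t\<in>edges S. src S s = tgt S t \<longrightarrow>
        mul S s t \<in> edges S \<and> src S (mul S s t) = src S t \<and> tgt S (mul S s t) = tgt S s) \<and>
     (\<forall>s\<in>edges S. \<forall>t\<in>edges S. \<forall>u\<in>edges S. src S s = tgt S t \<and> src S t = tgt S u \<longrightarrow>
        mul S (mul S s t) u = mul S s (mul S t u))"

definition fin_sgd :: "('v, 'e) sgd \<Rightarrow> bool" where
  "fin_sgd S \<longleftrightarrow> is_sgd S \<and> finite (verts S) \<and> finite (edges S)"

definition graph_hom :: "('v, 'e, 'z) sgraph_scheme \<Rightarrow> ('w, 'f, 'y) sgraph_scheme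
     \<Rightarrow> ('v \<Rightarrow> 'w) \<Rightarrow> ('e \<Rightarrow> 'f) \<Rightarrow> bool" where
  "graph_hom G H fv fe \<longleftrightarrow> (\<forall>x\<in>verts G. fv x \<in> verts H) \<and>
     (\<forall>e\<in>edges G. fe e \<in> edges H \<and> src H (fe e) = fv (src G e) \<and> tgt H (fe e) = fv (tgt G e))"

definition sgd_hom :: "('v, 'e) sgd \<Rightarrow> ('w, 'f) sgd \<Rightarrow> ('v \<Rightarrow> 'w) \<Rightarrow> ('e \<Rightarrow> 'f) \<Rightarrow> bool" where
  "sgd_hom S T fv fe \<longleftrightarrow> graph_hom S T fv fe \<and>
     (\<forall>s\<in>edges S. \<forall>t\<in>edges S. src S s = tgt S t \<longrightarrow> fe (mul S s t) = mul T (fe s) (fe t))"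

definition sgd_iso :: "('v, 'e) sgd \<Rightarrow> ('w, 'f) sgd \<Rightarrow> bool" where
  "sgd_iso S T \<longleftrightarrow> (\<exists>fv fe. bij_betw fv (verts S) (verts T) \<and> bij_betw fe (edges S) (edges T) \<and>
      sgd_hom S T fv fe)"

text \<open>Tilson's division: a relational morphism (vertex function f, edge relation tau)
  that is injective on coterminal edges.\<close>
definition sgd_divides :: "('v, 'e) sgd \<Rightarrow> ('w, 'f) sgd \<Rightarrow> bool" where
  "sgd_divides S T \<longleftrightarrow> (\<exists>f \<tau>.
     (\<forall>x\<in>verts S. f x \<in> verts T) \<and>
     (\<forall>s\<in>edges S. \<exists>t. (s, t) \<in> \<tau>) \<and>
     (\<forall>(s, t)\<in>\<tau>. s \<in> edges S \<and> t \<in> edges T \<and> src T t = f (src S s) \<and> tgt T t = f (tgt S s)) \<and>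
     (\<forall>(s, t)\<in>\<tau>. \<forall>(s', t')\<in>\<tau>. src S s = tgt S s' \<longrightarrow> (mul S s s', mul T t t') \<in> \<tau>) \<and>
     (\<forall>(s, t)\<in>\<tau>. \<forall>(s', t')\<in>\<tau>. src S s = src S s' \<and> tgt S s = tgt S s' \<and> t = t' \<longrightarrow> s = s'))"

definition sgd_prod :: "('v, 'e) sgd \<Rightarrow> ('w, 'f) sgd \<Rightarrow> ('v \<times> 'w, 'e \<times> 'f) sgd" where
  "sgd_prod S T = \<lparr>verts = verts S \<times> verts T, edges = edges S \<times> edges T,
     src = (\<lambda>(a, b). (src S a, src T b)), tgt = (\<lambda>(a, b). (tgt S a, tgt T b)),
     mul = (\<lambda>(a, b) (c, d). (mul S a c, mul T b d))\<rparr>"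

definition sgd_coprod :: "('v, 'e) sgd \<Rightarrow> ('w, 'f) sgd \<Rightarrow> ('v + 'w, 'e + 'f) sgd" where
  "sgd_coprod S T = \<lparr>verts = Inl ` verts S \<union> Inr ` verts T, edges = Inl ` edges S \<union> Inr ` edges T,
     src = case_sum (Inl \<circ> src S) (Inr \<circ> src T), tgt = case_sum (Inl \<circ> tgt S) (Inr \<circ> tgt T),
     mul = (\<lambda>x y. case (x, y) of (Inl a, Inl b) \<Rightarrow> Inl (mul S a b)
                              | (Inr a, Inr b) \<Rightarrow> Inr (mul T a b)
                              | _ \<Rightarrow> x)\<rparr>"

definition sgd_terminal :: "(nat, nat) sgd" where
  "sgd_terminal = \<lparr>verts = {0}, edges = {0}, src = (\<lambda>_. 0), tgt = (\<lambda>_. 0), mul = (\<lambda>_ _. 0)\<rparr>"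

definition sgd_empty :: "(nat, nat) sgd" where
  "sgd_empty = \<lparr>verts = {}, edges = {}, src = (\<lambda>_. 0), tgt = (\<lambda>_. 0), mul = (\<lambda>_ _. 0)\<rparr>"

definition sgd_pvar :: "(nat, nat) sgd set \<Rightarrow> bool" where
  "sgd_pvar C \<longleftrightarrow> (\<forall>S\<in>C. fin_sgd S) \<and> sgd_terminal \<in> C \<and> sgd_empty \<in> C \<and>
     (\<forall>S T. fin_sgd S \<and> T \<in> C \<and> sgd_divides S T \<longrightarrow> S \<in> C) \<and>
     (\<forall>P S T. fin_sgd P \<and> S \<in> C \<and> T \<in> C \<and> sgd_iso P (sgd_prod S T) \<longrightarrow> P \<in> C) \<and>
     (\<forall>P S T. fin_sgd P \<and> S \<in> C \<and> T \<in> C \<and> sgd_iso P (sgd_coprod S T) \<longrightarrow> P \<in> C)"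

definition sg_as_sgd :: "nat sg \<Rightarrow> (nat, nat) sgd" where
  "sg_as_sgd S = \<lparr>verts = {0}, edges = fst S, src = (\<lambda>_. 0), tgt = (\<lambda>_. 0), mul = snd S\<rparr>"

definition gV :: "nat sg set \<Rightarrow> (nat, nat) sgd set" where
  "gV V = \<Inter> {C. sgd_pvar C \<and> sg_as_sgd ` V \<subseteq> C}"

inductive_set sgd_gen :: "('v, 'e) sgd \<Rightarrow> 'e set \<Rightarrow> 'e set" for S F where
  base: "e \<in> F \<Longrightarrow> e \<in> sgd_gen S F"
| mult: "s \<in> sgd_gen S F \<Longrightarrow> t \<in> sgd_gen S F \<Longrightarrow> src S s = tgt S t \<Longrightarrow> mul S s t \<in> sgd_gen S F"

type_synonym ('v, 'e) sgd_val = "(nat, nat) sgd \<times> ('v \<Rightarrow> nat) \<times> ('e \<Rightarrow> nat)"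

definition sgd_val :: "(nat, nat) sgd set \<Rightarrow> ('v, 'e) sgraph \<Rightarrow> ('v, 'e) sgd_val \<Rightarrow> bool" where
  "sgd_val C A v \<longleftrightarrow> fst v \<in> C \<and> graph_hom A (fst v) (fst (snd v)) (snd (snd v))"

text \<open>An edge (x, y, w): source x, range y (vertices of A), and a compatible family w.\<close>
definition free_sgd_edges :: "(nat, nat) sgd set \<Rightarrow> ('v, 'e) sgraph
     \<Rightarrow> ('v \<times> 'v \<times> (('v, 'e) sgd_val \<Rightarrow> nat)) set" where
  "free_sgd_edges C A = {(x, y, w). x \<in> verts A \<and> y \<in> verts A \<and>
     (\<forall>S fv fe. sgd_val C A (S, fv, fe) \<longrightarrow>
        w (S, fv, fe) \<in> sgd_gen S (fe ` edges A) \<and>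
        src S (w (S, fv, fe)) = fv x \<and> tgt S (w (S, fv, fe)) = fv y) \<and>
     (\<forall>v. \<not> sgd_val C A v \<longrightarrow> w v = 0) \<and>
     (\<forall>S fv fe T gv ge hv he. sgd_val C A (S, fv, fe) \<and> sgd_val C A (T, gv, ge) \<and>
        sgd_hom S T hv he \<and> (\<forall>x\<in>verts A. hv (fv x) = gv x) \<and> (\<forall>e\<in>edges A. he (fe e) = ge e)
        \<longrightarrow> he (w (S, fv, fe)) = w (T, gv, ge))}"

definition free_sgd_top :: "(nat, nat) sgd set \<Rightarrow> ('v, 'e) sgraph
     \<Rightarrow> ('v \<times> 'v \<times> (('v, 'e) sgd_val \<Rightarrow> nat)) topology" where
  "free_sgd_top C A = topology_generated_by
     (insert (free_sgd_edges C A)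
       ({{e \<in> free_sgd_edges C A. fst e = x} | x. True} \<union>
        {{e \<in> free_sgd_edges C A. fst (snd e) = y} | y. True} \<union>
        {{e \<in> free_sgd_edges C A. snd (snd e) v = n} | v n. True}))"

definition free_sgd_D :: "(nat, nat) sgd set \<Rightarrow> ('v, 'e) sgraph
     \<Rightarrow> (('v \<times> 'v \<times> (('v, 'e) sgd_val \<Rightarrow> nat)) \<times> ('v \<times> 'v \<times> (('v, 'e) sgd_val \<Rightarrow> nat))) set" where
  "free_sgd_D C A = {(s, t). s \<in> free_sgd_edges C A \<and> t \<in> free_sgd_edges C A \<and> fst s = fst (snd t)}"

definition free_sgd_mul :: "(nat, nat) sgd set \<Rightarrow> ('v, 'e) sgraph
     \<Rightarrow> ('v \<times> 'v \<times> (('v, 'e) sgd_val \<Rightarrow> nat)) \<Rightarrow> ('v \<times> 'v \<times> (('v, 'e) sgd_val \<Rightarrow> nat))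
     \<Rightarrow> ('v \<times> 'v \<times> (('v, 'e) sgd_val \<Rightarrow> nat))" where
  "free_sgd_mul C A s t = (fst t, fst (snd s),
     \<lambda>v. if sgd_val C A v then mul (fst v) (snd (snd s) v) (snd (snd t) v) else 0)"

definition free_sgd_mult_open :: "(nat, nat) sgd set \<Rightarrow> ('v, 'e) sgraph \<Rightarrow> bool" where
  "free_sgd_mult_open C A \<longleftrightarrow>
     open_map (subtopology (prod_topology (free_sgd_top C A) (free_sgd_top C A)) (free_sgd_D C A))
              (free_sgd_top C A) (\<lambda>(s, t). free_sgd_mul C A s t)"

end

theory Submission imports Defs "HOL-Library.Nat_Bijection" begin

definition divrel :: "('v, 'e) sgd \<Rightarrow> ('w, 'f) sgd \<Rightarrow> ('v \<Rightarrow> 'w) \<Rightarrow> ('e \<times> 'f) set \<Rightarrow> bool" where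
 "divrel S T f \<tau> \<longleftrightarrow>
     (\<forall>x\<in>verts S. f x \<in> verts T) \<and>
     (\<forall>s\<in>edges S. \<exists>t. (s, t) \<in> \<tau>) \<and>
     (\<forall>(s, t)\<in>\<tau>. s \<in> edges S \<and> t \<in> edges T \<and> src T t = f (src S s) \<and> tgt T t = f (tgt S s)) \<and>
     (\<forall>(s, t)\<in>\<tau>. \<forall>(s', t')\<in>\<tau>. src S s = tgt S s' \<longrightarrow> (mul S s s', mul T t t') \<in> \<tau>) \<and>
     (\<forall>(s, t)\<in>\<tau>. \<forall>(s', t')\<in>\<tau>. src S s = src S s' \<and> tgt S s = tgt S s' \<and> t = t' \<longrightarrow> s = s')"

lemma sgd_divides_iff: "sgd_divides S T \<longleftrightarrow> (\<exists>f \<tau>. divrel S T f \<tau>)"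
  unfolding sgd_divides_def divrel_def by (rule refl)

lemma divrelI:
  assumes "\<And>x. x\<in>verts S \<Longrightarrow> f x \<in> verts T"
    "\<And>s. s\<in>edges S \<Longrightarrow> \<exists>t. (s, t) \<in> \<tau>"
    "\<And>s t. (s, t)\<in>\<tau> \<Longrightarrow> s \<in> edges S \<and> t \<in> edges T \<and> src T t = f (src S s) \<and> tgt T t = f (tgt S s)"
    "\<And>s t s' t'. (s, t)\<in>\<tau> \<Longrightarrow> (s', t')\<in>\<tau> \<Longrightarrow> src S s = tgt S s' \<Longrightarrow> (mul S s s', mul T t t') \<in> \<tau>"
    "\<And>s t s' t'. (s, t)\<in>\<tau> \<Longrightarrow> (s', t')\<in>\<tau> \<Longrightarrow> src S s = src S s' \<Longrightarrow> tgt S s = tgt S s' \<Longrightarrow> t = t' \<Longrightarrow> s = s'"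
  shows "divrel S T f \<tau>"
  unfolding divrel_def using assms by fast

lemma divrelD:
  assumes "divrel S T f \<tau>"
  shows "\<And>x. x\<in>verts S \<Longrightarrow> f x \<in> verts T"
    "\<And>s. s\<in>edges S \<Longrightarrow> \<exists>t. (s, t) \<in> \<tau>"
    "\<And>s t. (s, t)\<in>\<tau> \<Longrightarrow> s \<in> edges S"
    "\<And>s t. (s, t)\<in>\<tau> \<Longrightarrow> t \<in> edges T"
    "\<And>s t. (s, t)\<in>\<tau> \<Longrightarrow> src T t = f (src S s)"
    "\<And>s t. (s, t)\<in>\<tau> \<Longrightarrow> tgt T t = f (tgt S s)"
    "\<And>s t s' t'. (s, t)\<in>\<tau> \<Longrightarrow> (s', t')\<in>\<tau> \<Longrightarrow> src S s = tgt S s' \<Longrightarrow> (mul S s s', mul T t t') \<in> \<tau>"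
    "\<And>s t s' t'. (s, t)\<in>\<tau> \<Longrightarrow> (s', t')\<in>\<tau> \<Longrightarrow> src S s = src S s' \<Longrightarrow> tgt S s = tgt S s' \<Longrightarrow> t = t' \<Longrightarrow> s = s'"
  using assms unfolding divrel_def by fast+


lemma sgd_divides_trans:
  assumes "sgd_divides S T" "sgd_divides T R" shows "sgd_divides S R"
proof -
  from assms obtain f1 \<tau>1 f2 \<tau>2 where a: "divrel S T f1 \<tau>1" and b: "divrel T R f2 \<tau>2"
    unfolding sgd_divides_iff by blast
  have "divrel S R (f2 \<circ> f1) (\<tau>1 O \<tau>2)"
  proof (rule divrelI)
    show "\<And>x. x\<in>verts S \<Longrightarrow> (f2 \<circ> f1) x \<in> verts R" using divrelD(1)[OF a] divrelD(1)[OF b] by auto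
    show "\<exists>r. (s, r) \<in> \<tau>1 O \<tau>2" if s: "s \<in> edges S" for s
    proof -
      obtain t where t: "(s,t) \<in> \<tau>1" using divrelD(2)[OF a s] by blast
      obtain r where "(t,r) \<in> \<tau>2" using divrelD(2)[OF b divrelD(4)[OF a t]] by blast
      with t show ?thesis by blast
    qed
    show "s \<in> edges S \<and> r \<in> edges R \<and> src R r = (f2 \<circ> f1) (src S s) \<and> tgt R r = (f2 \<circ> f1) (tgt S s)"
      if "(s, r) \<in> \<tau>1 O \<tau>2" for s r
      using that divrelD(3-6)[OF a] divrelD(3-6)[OF b] by fastforce
    show "(mul S s s', mul R r r') \<in> \<tau>1 O \<tau>2"
      if th: "(s, r) \<in> \<tau>1 O \<tau>2" "(s', r') \<in> \<tau>1 O \<tau>2" "src S s = tgt S s'" for s r s' r'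
    proof -
      obtain t t' where h: "(s, t) \<in> \<tau>1" "(t, r) \<in> \<tau>2" "(s', t') \<in> \<tau>1" "(t', r') \<in> \<tau>2"
        using th by blast
      have 1: "(mul S s s', mul T t t') \<in> \<tau>1" using divrelD(7)[OF a h(1) h(3) th(3)] .
      have "src T t = tgt T t'" using divrelD(5,6)[OF a] h th(3) by metis
      then have "(mul T t t', mul R r r') \<in> \<tau>2" using divrelD(7)[OF b h(2) h(4)] by blast
      with 1 show ?thesis by blast
    qed
    show "s = s'" if "(s, r) \<in> \<tau>1 O \<tau>2" "(s', r') \<in> \<tau>1 O \<tau>2" "src S s = src S s'"
      "tgt S s = tgt S s'" "r = r'" for s r s' r'
    proof -
      note th = that
      obtain t t' where h: "(s, t) \<in> \<tau>1" "(t, r) \<in> \<tau>2" "(s', t') \<in> \<tau>1" "(t', r') \<in> \<tau>2"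
        using th by blast
      have "src T t = src T t'" "tgt T t = tgt T t'" using divrelD(5,6)[OF a] h th(3,4) by metis+
      then have "t = t'" using divrelD(8)[OF b h(2) h(4)] th(5) by blast
      then show ?thesis using divrelD(8)[OF a h(1) h(3) th(3,4)] by blast
    qed
  qed
  then show ?thesis unfolding sgd_divides_iff by blast
qed

lemma sgd_iso_divides:
  assumes "sgd_iso P Q" "is_sgd P" shows "sgd_divides P Q"
proof -
  from assms obtain fv fe where bv: "bij_betw fv (verts P) (verts Q)" and be: "bij_betw fe (edges P) (edges Q)"
    and h: "sgd_hom P Q fv fe" unfolding sgd_iso_def by blast
  have inj: "inj_on fe (edges P)" using be bij_betw_def by blast
  have "divrel P Q fv {(s, fe s) | s. s \<in> edges P}"
    by (rule divrelI) (use h inj assms(2) in \<open>auto simp: is_sgd_def sgd_hom_def graph_hom_def inj_on_def\<close>)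
  then show ?thesis unfolding sgd_divides_iff by blast
qed


abbreviation "enc \<equiv> prod_encode"
abbreviation "dec \<equiv> prod_decode"

definition sgprod_nat :: "nat sg \<Rightarrow> nat sg \<Rightarrow> nat sg" where
  "sgprod_nat S T = (enc ` (fst S \<times> fst T),
     \<lambda>a b. enc (snd S (fst (dec a)) (fst (dec b)), snd T (snd (dec a)) (snd (dec b))))"

lemma dec_enc[simp]: "dec (enc p) = p" by (simp add: prod_encode_inverse)

lemma fin_sg_sgprod_nat: assumes "fin_sg S" "fin_sg T" shows "fin_sg (sgprod_nat S T)"
  using assms unfolding fin_sg_def sgprod_nat_def by auto

lemma sg_iso_sgprod_nat: assumes "fin_sg S" "fin_sg T" shows "sg_iso (sgprod_nat S T) (sg_prod S T)"
  unfolding sg_iso_def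
proof (intro exI[of _ dec] conjI)
  show "bij_betw dec (fst (sgprod_nat S T)) (fst (sg_prod S T))"
    unfolding sgprod_nat_def sg_prod_def bij_betw_def inj_on_def by (auto simp: image_iff)
  show "sg_hom (sgprod_nat S T) (sg_prod S T) dec"
    unfolding sg_hom_def sg_hom_on_def sgprod_nat_def sg_prod_def by auto
qed

lemma sgprod_nat_in: assumes "sg_pvar V" "S \<in> V" "T \<in> V" shows "sgprod_nat S T \<in> V"
proof -
  have f: "fin_sg S" "fin_sg T" using assms unfolding sg_pvar_def by auto
  show ?thesis using assms(1) fin_sg_sgprod_nat[OF f] sg_iso_sgprod_nat[OF f] assms(2,3)
    unfolding sg_pvar_def by blast
qed

lemma sgprod_nat_hom1: "sg_hom (sgprod_nat S T) S (\<lambda>a. fst (dec a))"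
  unfolding sg_hom_def sg_hom_on_def sgprod_nat_def by auto
lemma sgprod_nat_hom2: "sg_hom (sgprod_nat S T) T (\<lambda>a. snd (dec a))"
  unfolding sg_hom_def sg_hom_on_def sgprod_nat_def by auto

definition sgdprod_nat :: "(nat, nat) sgd \<Rightarrow> (nat, nat) sgd \<Rightarrow> (nat, nat) sgd" where
  "sgdprod_nat C1 C2 = \<lparr>verts = enc ` (verts C1 \<times> verts C2), edges = enc ` (edges C1 \<times> edges C2),
     src = (\<lambda>e. enc (src C1 (fst (dec e)), src C2 (snd (dec e)))),
     tgt = (\<lambda>e. enc (tgt C1 (fst (dec e)), tgt C2 (snd (dec e)))),
     mul = (\<lambda>a b. enc (mul C1 (fst (dec a)) (fst (dec b)), mul C2 (snd (dec a)) (snd (dec b))))\<rparr>"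

lemma fin_sgd_sgdprod_nat: assumes "fin_sgd C1" "fin_sgd C2" shows "fin_sgd (sgdprod_nat C1 C2)"
  using assms unfolding fin_sgd_def is_sgd_def is_graph_def sgdprod_nat_def by auto

lemma sgd_iso_sgdprod_nat: "sgd_iso (sgdprod_nat C1 C2) (sgd_prod C1 C2)"
  unfolding sgd_iso_def
proof (intro exI[of _ dec] conjI)
  show "bij_betw dec (verts (sgdprod_nat C1 C2)) (verts (sgd_prod C1 C2))"
    unfolding sgdprod_nat_def sgd_prod_def bij_betw_def inj_on_def by (auto simp: image_iff)
  show "bij_betw dec (edges (sgdprod_nat C1 C2)) (edges (sgd_prod C1 C2))"
    unfolding sgdprod_nat_def sgd_prod_def bij_betw_def inj_on_def by (auto simp: image_iff)
  show "sgd_hom (sgdprod_nat C1 C2) (sgd_prod C1 C2) dec dec"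
    unfolding sgd_hom_def graph_hom_def sgdprod_nat_def sgd_prod_def by auto
qed

lemma sgdprod_nat_hom1: "sgd_hom (sgdprod_nat C1 C2) C1 (\<lambda>a. fst (dec a)) (\<lambda>a. fst (dec a))"
  unfolding sgd_hom_def graph_hom_def sgdprod_nat_def by auto
lemma sgdprod_nat_hom2: "sgd_hom (sgdprod_nat C1 C2) C2 (\<lambda>a. snd (dec a)) (\<lambda>a. snd (dec a))"
  unfolding sgd_hom_def graph_hom_def sgdprod_nat_def by auto

lemma sgd_prod_divides:
  assumes a: "divrel S S' f1 \<tau>1" and b: "divrel T T' f2 \<tau>2"
  shows "sgd_divides (sgd_prod S T) (sgd_prod S' T')"
proof -
  have "divrel (sgd_prod S T) (sgd_prod S' T') (\<lambda>(x,y). (f1 x, f2 y))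
          {((s,t),(s',t')) | s t s' t'. (s,s') \<in> \<tau>1 \<and> (t,t') \<in> \<tau>2}"
  proof (rule divrelI)
    show "\<exists>r. (p, r) \<in> {((s,t),(s',t')) | s t s' t'. (s,s') \<in> \<tau>1 \<and> (t,t') \<in> \<tau>2}"
      if pp: "p \<in> edges (sgd_prod S T)" for p
    proof -
      obtain s t where p: "p = (s,t)" "s \<in> edges S" "t \<in> edges T" using pp by (auto simp: sgd_prod_def)
      obtain s' where "(s,s') \<in> \<tau>1" using divrelD(2)[OF a p(2)] by blast
      moreover obtain t' where "(t,t') \<in> \<tau>2" using divrelD(2)[OF b p(3)] by blast
      ultimately show ?thesis using p by blast
    qed
  qed (use divrelD[OF a] divrelD[OF b] in \<open>auto simp: sgd_prod_def\<close>)
  then show ?thesis unfolding sgd_divides_iff by blast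
qed

lemma sg_as_sgd_prod_divides:
  assumes "fin_sg S1" "fin_sg T1" shows "sgd_divides (sgd_prod (sg_as_sgd S1) (sg_as_sgd T1)) (sg_as_sgd (sgprod_nat S1 T1))"
proof -
  have "divrel (sgd_prod (sg_as_sgd S1) (sg_as_sgd T1)) (sg_as_sgd (sgprod_nat S1 T1)) (\<lambda>_. 0)
          {((a,b), enc (a,b)) | a b. a \<in> fst S1 \<and> b \<in> fst T1}"
    by (rule divrelI) (use assms in \<open>auto simp: sgd_prod_def sg_as_sgd_def sgprod_nat_def fin_sg_def\<close>)
  then show ?thesis unfolding sgd_divides_iff by blast
qed

lemma sgd_coprod_divides:
  assumes a: "divrel S (sg_as_sgd S1) f1 \<tau>1" and b: "divrel T (sg_as_sgd T1) f2 \<tau>2"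
    and fa: "fin_sg S1" and fb: "fin_sg T1"
  shows "sgd_divides (sgd_coprod S T) (sg_as_sgd (sgprod_nat S1 T1))"
proof -
  let ?\<tau> = "{(Inl s, enc (a,b)) | s a b. (s,a) \<in> \<tau>1 \<and> b \<in> fst T1} \<union>
            {(Inr t, enc (a,b)) | t a b. a \<in> fst S1 \<and> (t,b) \<in> \<tau>2}"
  obtain a0 where a0: "a0 \<in> fst S1" using fa unfolding fin_sg_def by auto
  obtain b0 where b0: "b0 \<in> fst T1" using fb unfolding fin_sg_def by auto
  have cS: "\<And>x y. x \<in> fst S1 \<Longrightarrow> y \<in> fst S1 \<Longrightarrow> snd S1 x y \<in> fst S1" using fa unfolding fin_sg_def by auto
  have cT: "\<And>x y. x \<in> fst T1 \<Longrightarrow> y \<in> fst T1 \<Longrightarrow> snd T1 x y \<in> fst T1" using fb unfolding fin_sg_def by auto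
  have "divrel (sgd_coprod S T) (sg_as_sgd (sgprod_nat S1 T1)) (\<lambda>_. 0) ?\<tau>"
  proof (rule divrelI)
    show "\<exists>r. (p, r) \<in> ?\<tau>" if pp: "p \<in> edges (sgd_coprod S T)" for p
    proof -
      consider (l) s where "p = Inl s" "s \<in> edges S" | (r) t where "p = Inr t" "t \<in> edges T"
        using pp by (auto simp: sgd_coprod_def)
      then show ?thesis
      proof cases
        case l
        obtain a where "(s,a) \<in> \<tau>1" using divrelD(2)[OF a l(2)] by blast
        then show ?thesis using l b0 by blast
      next
        case r
        obtain b where "(t,b) \<in> \<tau>2" using divrelD(2)[OF b r(2)] by blast
        then show ?thesis using r a0 by blast
      qed
    qed
    show "p \<in> edges (sgd_coprod S T) \<and> r \<in> edges (sg_as_sgd (sgprod_nat S1 T1)) \<and>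
         src (sg_as_sgd (sgprod_nat S1 T1)) r = 0 \<and> tgt (sg_as_sgd (sgprod_nat S1 T1)) r = 0"
      if "(p, r) \<in> ?\<tau>" for p r
      using that divrelD(3,4)[OF a] divrelD(3,4)[OF b] by (auto simp: sgd_coprod_def sg_as_sgd_def sgprod_nat_def)
    show "(mul (sgd_coprod S T) p p', mul (sg_as_sgd (sgprod_nat S1 T1)) r r') \<in> ?\<tau>"
      if "(p, r) \<in> ?\<tau>" "(p', r') \<in> ?\<tau>" "src (sgd_coprod S T) p = tgt (sgd_coprod S T) p'" for p r p' r'
      using that divrelD(4,7)[OF a] divrelD(4,7)[OF b] cS cT
      by (auto simp: sgd_coprod_def sg_as_sgd_def sgprod_nat_def)
    show "p = p'"
      if "(p, r) \<in> ?\<tau>" "(p', r') \<in> ?\<tau>" "src (sgd_coprod S T) p = src (sgd_coprod S T) p'"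
        "tgt (sgd_coprod S T) p = tgt (sgd_coprod S T) p'" "r = r'" for p r p' r'
      using that divrelD(8)[OF a] divrelD(8)[OF b]
      by (auto simp: sgd_coprod_def sg_as_sgd_def)
  qed (simp add: sg_as_sgd_def)
  then show ?thesis unfolding sgd_divides_iff by blast
qed



section \<open>gV consists of divisors of members of V\<close>

definition Dcl :: "nat sg set \<Rightarrow> (nat, nat) sgd set" where
  "Dcl V = {C. fin_sgd C \<and> (\<exists>S\<in>V. sgd_divides C (sg_as_sgd S))}"

lemma fin_sgd_sg_as_sgd: "fin_sg S \<Longrightarrow> fin_sgd (sg_as_sgd S)"
  unfolding fin_sg_def fin_sgd_def is_sgd_def is_graph_def sg_as_sgd_def by auto

lemma sg_as_sgd_self_div: assumes that: "fin_sg S" shows "sgd_divides (sg_as_sgd S) (sg_as_sgd S)"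
proof -
  have "divrel (sg_as_sgd S) (sg_as_sgd S) id (Id_on (fst S))"
    by (rule divrelI) (use that in \<open>auto simp: sg_as_sgd_def fin_sg_def\<close>)
  then show ?thesis unfolding sgd_divides_iff by blast
qed

lemma Dcl_pvar: assumes V: "sg_pvar V" shows "sgd_pvar (Dcl V)"
proof -
  have triv: "sg_trivial \<in> V" using V unfolding sg_pvar_def by blast
  have finV: "\<And>S. S \<in> V \<Longrightarrow> fin_sg S" using V unfolding sg_pvar_def by blast
  have t1: "sgd_terminal \<in> Dcl V"
  proof -
    have "divrel sgd_terminal (sg_as_sgd sg_trivial) (\<lambda>_. 0) {(0,0)}"
      by (rule divrelI) (auto simp: sgd_terminal_def sg_as_sgd_def sg_trivial_def)
    moreover have "fin_sgd sgd_terminal" by (simp add: fin_sgd_def is_sgd_def is_graph_def sgd_terminal_def)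
    ultimately show ?thesis using triv unfolding Dcl_def sgd_divides_iff by blast
  qed
  have t2: "sgd_empty \<in> Dcl V"
  proof -
    have "divrel sgd_empty (sg_as_sgd sg_trivial) (\<lambda>_. 0) {}"
      by (rule divrelI) (auto simp: sgd_empty_def)
    moreover have "fin_sgd sgd_empty" by (simp add: fin_sgd_def is_sgd_def is_graph_def sgd_empty_def)
    ultimately show ?thesis using triv unfolding Dcl_def sgd_divides_iff by blast
  qed
  have t3: "S \<in> Dcl V" if h: "fin_sgd S" "T \<in> Dcl V" "sgd_divides S T" for S T
  proof -
    obtain S1 where "S1 \<in> V" "sgd_divides T (sg_as_sgd S1)" using h(2) unfolding Dcl_def by blast
    then show ?thesis using sgd_divides_trans[OF h(3)] h(1) unfolding Dcl_def by auto
  qed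
  have t4: "P \<in> Dcl V" if p: "fin_sgd P" "S \<in> Dcl V" "T \<in> Dcl V" "sgd_iso P (sgd_prod S T)" for P S T
  proof -
    obtain S1 T1 f1 \<tau>1 f2 \<tau>2 where s1: "S1 \<in> V" "divrel S (sg_as_sgd S1) f1 \<tau>1"
      and t1: "T1 \<in> V" "divrel T (sg_as_sgd T1) f2 \<tau>2"
      using p(2,3) unfolding Dcl_def sgd_divides_iff by blast
    have d1: "sgd_divides P (sgd_prod S T)" using sgd_iso_divides p(1,4) unfolding fin_sgd_def by blast
    have d2: "sgd_divides (sgd_prod S T) (sgd_prod (sg_as_sgd S1) (sg_as_sgd T1))"
      using sgd_prod_divides[OF s1(2) t1(2)] .
    have d3: "sgd_divides (sgd_prod (sg_as_sgd S1) (sg_as_sgd T1)) (sg_as_sgd (sgprod_nat S1 T1))"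
      using sg_as_sgd_prod_divides finV s1(1) t1(1) by blast
    have "sgd_divides P (sg_as_sgd (sgprod_nat S1 T1))"
      using sgd_divides_trans[OF d1 sgd_divides_trans[OF d2 d3]] .
    then show ?thesis using p(1) sgprod_nat_in[OF V s1(1) t1(1)] unfolding Dcl_def by blast
  qed
  have t5: "P \<in> Dcl V" if p: "fin_sgd P" "S \<in> Dcl V" "T \<in> Dcl V" "sgd_iso P (sgd_coprod S T)" for P S T
  proof -
    obtain S1 T1 f1 \<tau>1 f2 \<tau>2 where s1: "S1 \<in> V" "divrel S (sg_as_sgd S1) f1 \<tau>1"
      and t1: "T1 \<in> V" "divrel T (sg_as_sgd T1) f2 \<tau>2"
      using p(2,3) unfolding Dcl_def sgd_divides_iff by blast
    have d1: "sgd_divides P (sgd_coprod S T)" using sgd_iso_divides p(1,4) unfolding fin_sgd_def by blast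
    have d2: "sgd_divides (sgd_coprod S T) (sg_as_sgd (sgprod_nat S1 T1))"
      using sgd_coprod_divides[OF s1(2) t1(2)] finV s1(1) t1(1) by blast
    have "sgd_divides P (sg_as_sgd (sgprod_nat S1 T1))"
      using sgd_divides_trans[OF d1 d2] .
    then show ?thesis using p(1) sgprod_nat_in[OF V s1(1) t1(1)] unfolding Dcl_def by blast
  qed
  have t6: "\<forall>S\<in>Dcl V. fin_sgd S" unfolding Dcl_def by blast
  show ?thesis unfolding sgd_pvar_def
    apply (intro conjI allI impI)
    subgoal using t6 by blast
    subgoal using t1 by blast
    subgoal using t2 by blast
    subgoal using t3 by blast
    subgoal using t4 by blast
    subgoal using t5 by blast
    done
qed

lemma sg_as_sgd_Dcl: assumes "sg_pvar V" shows "sg_as_sgd ` V \<subseteq> Dcl V"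
proof
  fix C assume "C \<in> sg_as_sgd ` V"
  then obtain S where S: "S \<in> V" "C = sg_as_sgd S" by blast
  have "fin_sg S" using assms S(1) unfolding sg_pvar_def by blast
  then show "C \<in> Dcl V" unfolding Dcl_def using S fin_sgd_sg_as_sgd sg_as_sgd_self_div by blast
qed

lemma gV_Dcl: assumes "sg_pvar V" shows "gV V \<subseteq> Dcl V"
  unfolding gV_def by (rule Inter_lower) (use Dcl_pvar[OF assms] sg_as_sgd_Dcl[OF assms] in simp)

lemma gV_fin: "sg_pvar V \<Longrightarrow> C \<in> gV V \<Longrightarrow> fin_sgd C"
  using gV_Dcl unfolding Dcl_def by blast

lemma gV_sg: "S \<in> V \<Longrightarrow> sg_as_sgd S \<in> gV V"
  unfolding gV_def by (rule InterI) blast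

lemma gV_div: assumes "fin_sgd S" "T \<in> gV V" "sgd_divides S T" shows "S \<in> gV V"
  unfolding gV_def
proof (rule InterI)
  fix C assume "C \<in> {C. sgd_pvar C \<and> sg_as_sgd ` V \<subseteq> C}"
  then have C: "sgd_pvar C" "T \<in> C" using assms(2) unfolding gV_def by blast+
  from C(1) have "\<forall>S T. fin_sgd S \<and> T \<in> C \<and> sgd_divides S T \<longrightarrow> S \<in> C" unfolding sgd_pvar_def by (elim conjE)
  then show "S \<in> C" using C(2) assms(1,3) by blast
qed

lemma gV_prod: assumes "fin_sgd P" "S \<in> gV V" "T \<in> gV V" "sgd_iso P (sgd_prod S T)" shows "P \<in> gV V"
  unfolding gV_def
proof (rule InterI)
  fix C assume "C \<in> {C. sgd_pvar C \<and> sg_as_sgd ` V \<subseteq> C}"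
  then have C: "sgd_pvar C" "S \<in> C" "T \<in> C" using assms(2,3) unfolding gV_def by blast+
  from C(1) have "\<forall>P S T. fin_sgd P \<and> S \<in> C \<and> T \<in> C \<and> sgd_iso P (sgd_prod S T) \<longrightarrow> P \<in> C"
    unfolding sgd_pvar_def by (elim conjE)
  then show "P \<in> C" using C(2,3) assms(1,4) by blast
qed

lemma gV_terminal: "sgd_terminal \<in> gV V"
  unfolding gV_def sgd_pvar_def by (rule InterI) (elim CollectE conjE)


lemma pvar_fin: "sg_pvar V \<Longrightarrow> S \<in> V \<Longrightarrow> fin_sg S"
  unfolding sg_pvar_def by blast

fun wev :: "('a \<Rightarrow> 'a \<Rightarrow> 'a) \<Rightarrow> ('x \<Rightarrow> 'a) \<Rightarrow> 'x \<Rightarrow> 'x list \<Rightarrow> 'a" where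
  "wev m \<phi> a [] = \<phi> a"
| "wev m \<phi> a (b # l) = m (\<phi> a) (wev m \<phi> b l)"

lemma wev_in:
  assumes "\<And>x y. x \<in> K \<Longrightarrow> y \<in> K \<Longrightarrow> m x y \<in> K" "\<phi> ` X \<subseteq> K" "a \<in> X" "set l \<subseteq> X"
  shows "wev m \<phi> a l \<in> K"
  using assms(3,4) by (induction l arbitrary: a) (use assms(1,2) in auto)

lemma wev_append:
  assumes cl: "\<And>x y. x \<in> K \<Longrightarrow> y \<in> K \<Longrightarrow> m x y \<in> K"
    and asc: "\<And>x y z. x \<in> K \<Longrightarrow> y \<in> K \<Longrightarrow> z \<in> K \<Longrightarrow> m (m x y) z = m x (m y z)"
    and ph: "\<phi> ` X \<subseteq> K" and X: "a \<in> X" "set l1 \<subseteq> X" "b \<in> X" "set l2 \<subseteq> X"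
  shows "wev m \<phi> a (l1 @ b # l2) = m (wev m \<phi> a l1) (wev m \<phi> b l2)"
  using X(1,2)
proof (induction l1 arbitrary: a)
  case Nil then show ?case by simp
next
  case (Cons c l1)
  have "wev m \<phi> a ((c # l1) @ b # l2) = m (\<phi> a) (m (wev m \<phi> c l1) (wev m \<phi> b l2))"
    using Cons by simp
  also have "\<dots> = m (m (\<phi> a) (wev m \<phi> c l1)) (wev m \<phi> b l2)"
    using asc[of "\<phi> a" "wev m \<phi> c l1" "wev m \<phi> b l2"] wev_in[OF cl ph] Cons.prems X(3,4) ph by auto
  finally show ?case by simp
qed

lemma sg_gen_word:
  assumes "fin_sg S" "\<phi> ` X \<subseteq> fst S" "z \<in> sg_gen (snd S) (\<phi> ` X)"
  shows "\<exists>a l. a \<in> X \<and> set l \<subseteq> X \<and> z = wev (snd S) \<phi> a l"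
  using assms(3)
proof (induction rule: sg_gen.induct)
  case (base x)
  then obtain a where "a \<in> X" "x = \<phi> a" by blast
  then show ?case by (intro exI[of _ a] exI[of _ "[]"]) simp
next
  case (mult z1 z2)
  obtain a l1 where 1: "a \<in> X" "set l1 \<subseteq> X" "z1 = wev (snd S) \<phi> a l1" using mult.IH(1) by blast
  obtain b l2 where 2: "b \<in> X" "set l2 \<subseteq> X" "z2 = wev (snd S) \<phi> b l2" using mult.IH(2) by blast
  have "snd S z1 z2 = wev (snd S) \<phi> a (l1 @ b # l2)"
    using wev_append[of "fst S" "snd S" \<phi> X a l1 b l2] assms(1,2) 1 2 unfolding fin_sg_def by auto
  then show ?case using 1 2 by (intro exI[of _ a] exI[of _ "l1 @ b # l2"]) auto
qed

lemma wev_hom: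
  assumes "fin_sg S" "sg_hom S T h" "\<phi> ` X \<subseteq> fst S" "\<And>x. x \<in> X \<Longrightarrow> h (\<phi> x) = \<psi> x"
    "a \<in> X" "set l \<subseteq> X"
  shows "h (wev (snd S) \<phi> a l) = wev (snd T) \<psi> a l"
  using assms(5,6)
proof (induction l arbitrary: a)
  case Nil then show ?case using assms(4) by simp
next
  case (Cons b l)
  have "wev (snd S) \<phi> b l \<in> fst S"
    by (rule wev_in[of "fst S" "snd S" \<phi> X]) (use assms(1,3) Cons.prems in \<open>auto simp: fin_sg_def\<close>)
  then show ?case using Cons assms(2,3,4) unfolding sg_hom_def sg_hom_on_def by auto
qed

lemma sg_hom_comp: "sg_hom S T h \<Longrightarrow> sg_hom T R g \<Longrightarrow> sg_hom S R (g \<circ> h)"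
  unfolding sg_hom_def sg_hom_on_def by auto

lemma multi_val:
  assumes V: "sg_pvar V" and vs: "\<forall>v\<in>set vs. sg_val V X v"
  shows "\<exists>T \<psi>. sg_val V X (T, \<psi>) \<and> (\<forall>v\<in>set vs. \<exists>h. sg_hom T (fst v) h \<and> (\<forall>x\<in>X. h (\<psi> x) = snd v x))"
  using vs
proof (induction vs)
  case Nil
  have "sg_trivial \<in> V" using V unfolding sg_pvar_def by blast
  then have "sg_val V X (sg_trivial, \<lambda>_. 0)" unfolding sg_val_def sg_trivial_def by auto
  then show ?case by (intro exI[of _ sg_trivial] exI[of _ "\<lambda>_. 0"]) simp
next
  case (Cons v vs)
  obtain T' \<psi>' where T': "sg_val V X (T', \<psi>')"
    "\<forall>v\<in>set vs. \<exists>h. sg_hom T' (fst v) h \<and> (\<forall>x\<in>X. h (\<psi>' x) = snd v x)" using Cons by auto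
  have v: "fst v \<in> V" "snd v ` X \<subseteq> fst (fst v)" using Cons.prems unfolding sg_val_def by auto
  let ?T = "sgprod_nat (fst v) T'"
  let ?\<psi> = "\<lambda>x. enc (snd v x, \<psi>' x)"
  have "?T \<in> V" using sgprod_nat_in[OF V v(1)] T'(1) unfolding sg_val_def by auto
  moreover have "?\<psi> ` X \<subseteq> fst ?T" using T'(1) v(2) unfolding sg_val_def sgprod_nat_def by auto
  ultimately have "sg_val V X (?T, ?\<psi>)" unfolding sg_val_def by simp
  moreover have "\<exists>h. sg_hom ?T (fst w) h \<and> (\<forall>x\<in>X. h (?\<psi> x) = snd w x)" if w: "w \<in> set (v # vs)" for w
  proof (cases "w = v")
    case True
    then show ?thesis using sgprod_nat_hom1[of "fst v" T'] by (intro exI[of _ "\<lambda>a. fst (dec a)"]) auto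
  next
    case False
    then have "w \<in> set vs" using w by auto
    then obtain h where h: "sg_hom T' (fst w) h" "\<forall>x\<in>X. h (\<psi>' x) = snd w x" using T'(2) by blast
    show ?thesis
      using sg_hom_comp[OF sgprod_nat_hom2[of "fst v" T'] h(1)] h(2)
      by (intro exI[of _ "h \<circ> (\<lambda>a. snd (dec a))"]) auto
  qed
  ultimately show ?case by blast
qed

lemma free_sgE:
  assumes "u \<in> free_sg V X"
  shows "\<And>v. sg_val V X v \<Longrightarrow> u v \<in> sg_gen (snd (fst v)) (snd v ` X)"
    "\<And>v. \<not> sg_val V X v \<Longrightarrow> u v = 0"
    "\<And>S \<phi> T \<psi> h. sg_val V X (S, \<phi>) \<Longrightarrow> sg_val V X (T, \<psi>) \<Longrightarrow> sg_hom S T h \<Longrightarrow>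
        (\<forall>x\<in>X. h (\<phi> x) = \<psi> x) \<Longrightarrow> h (u (S, \<phi>)) = u (T, \<psi>)"
proof -
  have c: "(\<forall>v. sg_val V X v \<longrightarrow> u v \<in> sg_gen (snd (fst v)) (snd v ` X)) \<and>
     (\<forall>v. \<not> sg_val V X v \<longrightarrow> u v = 0) \<and>
     (\<forall>S \<phi> T \<psi> h. sg_val V X (S, \<phi>) \<and> sg_val V X (T, \<psi>) \<and> sg_hom S T h \<and>
        (\<forall>x\<in>X. h (\<phi> x) = \<psi> x) \<longrightarrow> h (u (S, \<phi>)) = u (T, \<psi>))"
    using assms unfolding free_sg_def by (rule CollectD)
  show "\<And>v. sg_val V X v \<Longrightarrow> u v \<in> sg_gen (snd (fst v)) (snd v ` X)" using c by blast
  show "\<And>v. \<not> sg_val V X v \<Longrightarrow> u v = 0" using c by blast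
  show "\<And>S \<phi> T \<psi> h. sg_val V X (S, \<phi>) \<Longrightarrow> sg_val V X (T, \<psi>) \<Longrightarrow> sg_hom S T h \<Longrightarrow>
        (\<forall>x\<in>X. h (\<phi> x) = \<psi> x) \<Longrightarrow> h (u (S, \<phi>)) = u (T, \<psi>)"
    using c by blast
qed

lemma free_sg_word:
  assumes V: "sg_pvar V" and u: "u \<in> free_sg V X" and vs: "\<forall>v\<in>set vs. sg_val V X v"
  shows "\<exists>a l. a \<in> X \<and> set l \<subseteq> X \<and> (\<forall>v\<in>set vs. u v = wev (snd (fst v)) (snd v) a l)"
proof -
  obtain T \<psi> where T: "sg_val V X (T, \<psi>)"
    "\<forall>v\<in>set vs. \<exists>h. sg_hom T (fst v) h \<and> (\<forall>x\<in>X. h (\<psi> x) = snd v x)"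
    using multi_val[OF V vs] by blast
  have "T \<in> V" using T(1) unfolding sg_val_def by simp
  then have finT: "fin_sg T" using pvar_fin[OF V] by blast
  have g: "u (T, \<psi>) \<in> sg_gen (snd T) (\<psi> ` X)" using free_sgE(1)[OF u T(1)] by simp
  have ps: "\<psi> ` X \<subseteq> fst T" using T(1) unfolding sg_val_def by simp
  have "\<exists>a l. a \<in> X \<and> set l \<subseteq> X \<and> u (T, \<psi>) = wev (snd T) \<psi> a l"
    by (rule sg_gen_word[OF finT ps g])
  then obtain a l where w: "a \<in> X" "set l \<subseteq> X" "u (T, \<psi>) = wev (snd T) \<psi> a l"
    by blast
  have "u v = wev (snd (fst v)) (snd v) a l" if v: "v \<in> set vs" for v
  proof -
    obtain S \<phi> where v': "v = (S, \<phi>)" by (cases v)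
    obtain h where h: "sg_hom T S h" "\<forall>x\<in>X. h (\<psi> x) = \<phi> x" using T(2) v v' by fastforce
    have sv: "sg_val V X (S, \<phi>)" using vs v v' by blast
    have "h (u (T, \<psi>)) = u (S, \<phi>)" using free_sgE(3)[OF u T(1) sv h(1) h(2)] .
    moreover have "h (wev (snd T) \<psi> a l) = wev (snd S) \<phi> a l"
      by (rule wev_hom[OF finT h(1)]) (use T(1) h(2) w in \<open>auto simp: sg_val_def\<close>)
    ultimately show ?thesis using w(3) v' by simp
  qed
  then show ?thesis using w(1,2) by blast
qed

section \<open>B2 and paths\<close>

fun bchain :: "('x \<Rightarrow> bool) \<Rightarrow> ('x \<Rightarrow> bool) \<Rightarrow> 'x \<Rightarrow> 'x list \<Rightarrow> bool" where
  "bchain P Q a [] = True"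
| "bchain P Q a (b # l) = (Q a = P b \<and> bchain P Q b l)"

lemma B2_mul: "snd B2 (Some (p, r)) (Some (s, q)) = (if r = s then Some (p, q) else None)"
  "snd B2 None x = None" "snd B2 x None = None"
  unfolding B2_def by (auto split: option.splits)

lemma wev_B2:
  "wev (snd B2) (\<lambda>e. Some (P e, Q e)) a l = (if bchain P Q a l then Some (P a, Q (last (a # l))) else None)"
  by (induction l arbitrary: a) (auto simp: B2_mul)

fun apath :: "('v, 'e) sgraph \<Rightarrow> 'e \<Rightarrow> 'e list \<Rightarrow> bool" where
  "apath A a [] = True"
| "apath A a (b # l) = (src A a = tgt A b \<and> apath A b l)"

lemma bchain_apath:
  assumes "is_graph A" "a \<in> edges A" "set l \<subseteq> edges A"
    "\<forall>x\<in>verts A. bchain (\<lambda>e. tgt A e = x) (\<lambda>e. src A e = x) a l"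
  shows "apath A a l"
  using assms(2-4)
proof (induction l arbitrary: a)
  case Nil then show ?case by simp
next
  case (Cons b l)
  have "src A a \<in> verts A" using assms(1) Cons.prems(1) unfolding is_graph_def by blast
  then have "src A a = tgt A b" using Cons.prems(3) by fastforce
  moreover have "apath A b l" using Cons by auto
  ultimately show ?case by simp
qed

section \<open>Semigroupoid words along paths\<close>

lemma is_sgdD:
  assumes "is_sgd C" "s \<in> edges C" "t \<in> edges C" "src C s = tgt C t"
  shows "mul C s t \<in> edges C" "src C (mul C s t) = src C t" "tgt C (mul C s t) = tgt C s"
  using assms unfolding is_sgd_def by blast+

lemma wev_sgd:
  assumes C: "is_sgd C" and g: "graph_hom A C fv fe" and a: "a \<in> edges A" "set l \<subseteq> edges A" "apath A a l"
  shows "wev (mul C) fe a l \<in> edges C \<and> wev (mul C) fe a l \<in> sgd_gen C (fe ` edges A) \<and>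
         src C (wev (mul C) fe a l) = fv (src A (last (a # l))) \<and> tgt C (wev (mul C) fe a l) = fv (tgt A a)"
  using a
proof (induction l arbitrary: a)
  case Nil then show ?case using g unfolding graph_hom_def by (auto intro: sgd_gen.base)
next
  case (Cons b l)
  let ?w = "wev (mul C) fe b l"
  have IH: "?w \<in> edges C" "?w \<in> sgd_gen C (fe ` edges A)" "src C ?w = fv (src A (last (b # l)))"
    "tgt C ?w = fv (tgt A b)" using Cons by auto
  have fa: "fe a \<in> edges C" "src C (fe a) = fv (src A a)" "tgt C (fe a) = fv (tgt A a)"
    using g Cons.prems unfolding graph_hom_def by auto
  have comp: "src C (fe a) = tgt C ?w" using fa IH Cons.prems by simp
  have gen: "fe a \<in> sgd_gen C (fe ` edges A)" using Cons.prems by (auto intro: sgd_gen.base)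
  note m = is_sgdD[OF C fa(1) IH(1) comp]
  show ?case using m IH fa sgd_gen.mult[OF gen IH(2) comp] by simp
qed

lemma wev_sgd_hom:
  assumes C: "is_sgd C" and g: "graph_hom A C fv fe" and h: "sgd_hom C T hv he"
    and he: "\<And>e. e \<in> edges A \<Longrightarrow> he (fe e) = ge e"
    and a: "a \<in> edges A" "set l \<subseteq> edges A" "apath A a l"
  shows "he (wev (mul C) fe a l) = wev (mul T) ge a l"
  using a
proof (induction l arbitrary: a)
  case Nil then show ?case using he by simp
next
  case (Cons b l)
  let ?w = "wev (mul C) fe b l"
  have w: "?w \<in> edges C" "tgt C ?w = fv (tgt A b)" using wev_sgd[OF C g, of b l] Cons.prems by auto
  have fa: "fe a \<in> edges C" "src C (fe a) = fv (src A a)"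
    using g Cons.prems unfolding graph_hom_def by auto
  have "he (mul C (fe a) ?w) = mul T (he (fe a)) (he ?w)"
    using h w fa Cons.prems unfolding sgd_hom_def by auto
  then show ?case using Cons he by simp
qed

lemma wev_sgd_tau:
  assumes C: "is_sgd C" and g: "graph_hom A C fv fe" and d: "divrel C (sg_as_sgd S) f \<tau>"
    and t: "\<And>e. e \<in> edges A \<Longrightarrow> (fe e, \<phi> e) \<in> \<tau>"
    and a: "a \<in> edges A" "set l \<subseteq> edges A" "apath A a l"
  shows "(wev (mul C) fe a l, wev (snd S) \<phi> a l) \<in> \<tau>"
  using a
proof (induction l arbitrary: a)
  case Nil then show ?case using t by simp
next
  case (Cons b l)
  let ?w = "wev (mul C) fe b l"
  have w: "tgt C ?w = fv (tgt A b)" using wev_sgd[OF C g, of b l] Cons.prems by auto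
  have fa: "src C (fe a) = fv (src A a)" using g Cons.prems unfolding graph_hom_def by auto
  have "(?w, wev (snd S) \<phi> b l) \<in> \<tau>" using Cons by auto
  from divrelD(7)[OF d t[of a] this] show ?case using w fa Cons.prems by (simp add: sg_as_sgd_def)
qed


lemma free_sgd_edgesE:
  assumes "(x, y, w) \<in> free_sgd_edges C A"
  shows "x \<in> verts A" "y \<in> verts A"
   "\<And>S fv fe. sgd_val C A (S, fv, fe) \<Longrightarrow> w (S, fv, fe) \<in> sgd_gen S (fe ` edges A)"
   "\<And>S fv fe. sgd_val C A (S, fv, fe) \<Longrightarrow> src S (w (S, fv, fe)) = fv x"
   "\<And>S fv fe. sgd_val C A (S, fv, fe) \<Longrightarrow> tgt S (w (S, fv, fe)) = fv y"
   "\<And>v. \<not> sgd_val C A v \<Longrightarrow> w v = 0"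
   "\<And>S fv fe T gv ge hv he. sgd_val C A (S, fv, fe) \<Longrightarrow> sgd_val C A (T, gv, ge) \<Longrightarrow>
        sgd_hom S T hv he \<Longrightarrow> (\<forall>x\<in>verts A. hv (fv x) = gv x) \<Longrightarrow> (\<forall>e\<in>edges A. he (fe e) = ge e)
        \<Longrightarrow> he (w (S, fv, fe)) = w (T, gv, ge)"
proof -
  have c: "x \<in> verts A \<and> y \<in> verts A \<and>
     (\<forall>S fv fe. sgd_val C A (S, fv, fe) \<longrightarrow>
        w (S, fv, fe) \<in> sgd_gen S (fe ` edges A) \<and>
        src S (w (S, fv, fe)) = fv x \<and> tgt S (w (S, fv, fe)) = fv y) \<and>
     (\<forall>v. \<not> sgd_val C A v \<longrightarrow> w v = 0) \<and>
     (\<forall>S fv fe T gv ge hv he. sgd_val C A (S, fv, fe) \<and> sgd_val C A (T, gv, ge) \<and>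
        sgd_hom S T hv he \<and> (\<forall>x\<in>verts A. hv (fv x) = gv x) \<and> (\<forall>e\<in>edges A. he (fe e) = ge e)
        \<longrightarrow> he (w (S, fv, fe)) = w (T, gv, ge))"
    using assms unfolding free_sgd_edges_def mem_Collect_eq prod.case by assumption
  then show "x \<in> verts A" "y \<in> verts A"
   "\<And>S fv fe. sgd_val C A (S, fv, fe) \<Longrightarrow> w (S, fv, fe) \<in> sgd_gen S (fe ` edges A)"
   "\<And>S fv fe. sgd_val C A (S, fv, fe) \<Longrightarrow> src S (w (S, fv, fe)) = fv x"
   "\<And>S fv fe. sgd_val C A (S, fv, fe) \<Longrightarrow> tgt S (w (S, fv, fe)) = fv y"
   "\<And>v. \<not> sgd_val C A v \<Longrightarrow> w v = 0"
    by blast+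
  show "\<And>S fv fe T gv ge hv he. sgd_val C A (S, fv, fe) \<Longrightarrow> sgd_val C A (T, gv, ge) \<Longrightarrow>
        sgd_hom S T hv he \<Longrightarrow> (\<forall>x\<in>verts A. hv (fv x) = gv x) \<Longrightarrow> (\<forall>e\<in>edges A. he (fe e) = ge e)
        \<Longrightarrow> he (w (S, fv, fe)) = w (T, gv, ge)"
    using c by blast
qed

lemma free_sgd_edgesI:
  assumes "x \<in> verts A" "y \<in> verts A"
   "\<And>S fv fe. sgd_val C A (S, fv, fe) \<Longrightarrow> w (S, fv, fe) \<in> sgd_gen S (fe ` edges A)"
   "\<And>S fv fe. sgd_val C A (S, fv, fe) \<Longrightarrow> src S (w (S, fv, fe)) = fv x"
   "\<And>S fv fe. sgd_val C A (S, fv, fe) \<Longrightarrow> tgt S (w (S, fv, fe)) = fv y"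
   "\<And>v. \<not> sgd_val C A v \<Longrightarrow> w v = 0"
   "\<And>S fv fe T gv ge hv he. sgd_val C A (S, fv, fe) \<Longrightarrow> sgd_val C A (T, gv, ge) \<Longrightarrow>
        sgd_hom S T hv he \<Longrightarrow> (\<forall>x\<in>verts A. hv (fv x) = gv x) \<Longrightarrow> (\<forall>e\<in>edges A. he (fe e) = ge e)
        \<Longrightarrow> he (w (S, fv, fe)) = w (T, gv, ge)"
  shows "(x, y, w) \<in> free_sgd_edges C A"
proof -
  have c: "x \<in> verts A \<and> y \<in> verts A \<and>
     (\<forall>S fv fe. sgd_val C A (S, fv, fe) \<longrightarrow>
        w (S, fv, fe) \<in> sgd_gen S (fe ` edges A) \<and>
        src S (w (S, fv, fe)) = fv x \<and> tgt S (w (S, fv, fe)) = fv y) \<and>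
     (\<forall>v. \<not> sgd_val C A v \<longrightarrow> w v = 0) \<and>
     (\<forall>S fv fe T gv ge hv he. sgd_val C A (S, fv, fe) \<and> sgd_val C A (T, gv, ge) \<and>
        sgd_hom S T hv he \<and> (\<forall>x\<in>verts A. hv (fv x) = gv x) \<and> (\<forall>e\<in>edges A. he (fe e) = ge e)
        \<longrightarrow> he (w (S, fv, fe)) = w (T, gv, ge))"
    using assms by blast
  then show ?thesis unfolding free_sgd_edges_def mem_Collect_eq prod.case by assumption
qed

lemma free_sgI:
  assumes "\<And>v. sg_val V X v \<Longrightarrow> u v \<in> sg_gen (snd (fst v)) (snd v ` X)"
    "\<And>v. \<not> sg_val V X v \<Longrightarrow> u v = 0"
    "\<And>S \<phi> T \<psi> h. sg_val V X (S, \<phi>) \<Longrightarrow> sg_val V X (T, \<psi>) \<Longrightarrow> sg_hom S T h \<Longrightarrow>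
        (\<forall>x\<in>X. h (\<phi> x) = \<psi> x) \<Longrightarrow> h (u (S, \<phi>)) = u (T, \<psi>)"
  shows "u \<in> free_sg V X"
proof -
  have c: "(\<forall>v. sg_val V X v \<longrightarrow> u v \<in> sg_gen (snd (fst v)) (snd v ` X)) \<and>
     (\<forall>v. \<not> sg_val V X v \<longrightarrow> u v = 0) \<and>
     (\<forall>S \<phi> T \<psi> h. sg_val V X (S, \<phi>) \<and> sg_val V X (T, \<psi>) \<and> sg_hom S T h \<and>
        (\<forall>x\<in>X. h (\<phi> x) = \<psi> x) \<longrightarrow> h (u (S, \<phi>)) = u (T, \<psi>))"
    using assms by blast
  then show ?thesis unfolding free_sg_def mem_Collect_eq by assumption
qed

lemma sgd_gen_sg_as: "sgd_gen (sg_as_sgd S) Y = sg_gen (snd S) Y"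
proof
  show "sgd_gen (sg_as_sgd S) Y \<subseteq> sg_gen (snd S) Y"
  proof
    fix z assume "z \<in> sgd_gen (sg_as_sgd S) Y"
    then show "z \<in> sg_gen (snd S) Y"
      by (induction rule: sgd_gen.induct) (auto simp: sg_as_sgd_def intro: sg_gen.intros)
  qed
  show "sg_gen (snd S) Y \<subseteq> sgd_gen (sg_as_sgd S) Y"
  proof
    fix z assume "z \<in> sg_gen (snd S) Y"
    then show "z \<in> sgd_gen (sg_as_sgd S) Y"
    proof (induction rule: sg_gen.induct)
      case (base x) then show ?case by (rule sgd_gen.base)
    next
      case (mult a b)
      have "mul (sg_as_sgd S) a b \<in> sgd_gen (sg_as_sgd S) Y"
        by (rule sgd_gen.mult[OF mult.IH]) (simp add: sg_as_sgd_def)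
      then show ?case by (simp add: sg_as_sgd_def)
    qed
  qed
qed

lemma sg_hom_sgd: "sg_hom S T h \<Longrightarrow> sgd_hom (sg_as_sgd S) (sg_as_sgd T) (\<lambda>_. 0) h"
  unfolding sg_hom_def sg_hom_on_def sgd_hom_def graph_hom_def sg_as_sgd_def by auto

lemma sgd_gen_sub:
  assumes "is_sgd C" "graph_hom A C fv fe" shows "sgd_gen C (fe ` edges A) \<subseteq> edges C"
proof
  fix z assume "z \<in> sgd_gen C (fe ` edges A)"
  then show "z \<in> edges C"
  proof (induction rule: sgd_gen.induct)
    case (base e) then show ?case using assms(2) unfolding graph_hom_def by auto
  next
    case (mult s t) then show ?case using is_sgdD(1)[OF assms(1)] by blast
  qed
qed


definition Kc :: "(nat, nat) sgd" where
  "Kc = \<lparr>verts = {0, 1}, edges = {0, 1, 2, 3}, src = (\<lambda>e. e mod 2), tgt = (\<lambda>e. e div 2),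
         mul = (\<lambda>a b. 2 * (a div 2) + b mod 2)\<rparr>"

lemma Kc_fin: "fin_sgd Kc"
  unfolding fin_sgd_def is_sgd_def is_graph_def Kc_def by auto

lemma Kc_edge: "e \<in> edges Kc \<Longrightarrow> e = 2 * tgt Kc e + src Kc e"
  unfolding Kc_def by auto

lemma Kc_gV: "Kc \<in> gV V"
proof -
  have "divrel Kc sgd_terminal (\<lambda>_. 0) (edges Kc \<times> {0})"
  proof (rule divrelI)
    show "s = s'" if "(s, t) \<in> edges Kc \<times> {0}" "(s', t') \<in> edges Kc \<times> {0}" "src Kc s = src Kc s'"
      "tgt Kc s = tgt Kc s'" "t = t'" for s t s' t'
      using that Kc_edge by (metis SigmaD1)
  qed (auto simp: Kc_def sgd_terminal_def)
  then have "sgd_divides Kc sgd_terminal" unfolding sgd_divides_iff by blast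
  then show ?thesis using gV_div[OF Kc_fin gV_terminal] by blast
qed

locale mt =
  fixes A :: "('v, 'e) sgraph" and V :: "nat sg set"
  assumes graph: "is_graph A" and finA: "finite (verts A)" and V: "sg_pvar V" and B2V: "contains_B2 V"
begin

abbreviation "X \<equiv> edges A"
abbreviation "G \<equiv> gV V"
abbreviation "E \<equiv> free_sgd_edges (gV V) A"

definition iota :: "'v \<times> 'v \<times> (('v, 'e) sgd_val \<Rightarrow> nat) \<Rightarrow> nat sg \<times> ('e \<Rightarrow> nat) \<Rightarrow> nat" where
  "iota s = (\<lambda>v. if sg_val V X v then snd (snd s) (sg_as_sgd (fst v), \<lambda>_. 0, snd v) else 0)"

lemma G_fin: "C \<in> G \<Longrightarrow> fin_sgd C" using gV_fin[OF V] .
lemma G_sgd: "C \<in> G \<Longrightarrow> is_sgd C" using G_fin unfolding fin_sgd_def by blast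

lemma sgval_sgd: assumes "sg_val V X (S, \<phi>)" shows "sgd_val G A (sg_as_sgd S, \<lambda>_. 0, \<phi>)"
  using assms gV_sg unfolding sg_val_def sgd_val_def graph_hom_def sg_as_sgd_def by auto

lemma iota_in: assumes s: "(x, y, w) \<in> E" shows "iota (x, y, w) \<in> free_sg V X"
proof (rule free_sgI)
  fix v assume v: "sg_val V X v"
  obtain S \<phi> where v': "v = (S, \<phi>)" by (cases v)
  have "w (sg_as_sgd S, \<lambda>_. 0, \<phi>) \<in> sgd_gen (sg_as_sgd S) (\<phi> ` X)"
    using free_sgd_edgesE(3)[OF s sgval_sgd] v v' by blast
  then show "iota (x, y, w) v \<in> sg_gen (snd (fst v)) (snd v ` X)"
    using v v' by (simp add: iota_def sgd_gen_sg_as)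
next
  fix v assume "\<not> sg_val V X v" then show "iota (x, y, w) v = 0" by (simp add: iota_def)
next
  fix S \<phi> T \<psi> h assume a: "sg_val V X (S, \<phi>)" "sg_val V X (T, \<psi>)" "sg_hom S T h" "\<forall>x\<in>X. h (\<phi> x) = \<psi> x"
  have "h (w (sg_as_sgd S, \<lambda>_. 0, \<phi>)) = w (sg_as_sgd T, \<lambda>_. 0, \<psi>)"
    by (rule free_sgd_edgesE(7)[OF s sgval_sgd[OF a(1)] sgval_sgd[OF a(2)] sg_hom_sgd[OF a(3)]])
       (use a(4) in auto)
  then show "h (iota (x, y, w) (S, \<phi>)) = iota (x, y, w) (T, \<psi>)" using a by (simp add: iota_def)
qed

lemma mul_in:
  assumes s: "(x, y, w) \<in> E" and t: "(x', y', w') \<in> E" and xy: "x = y'"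
  shows "free_sgd_mul G A (x, y, w) (x', y', w') \<in> E"
  unfolding free_sgd_mul_def fst_conv snd_conv
proof (rule free_sgd_edgesI)
  show "x' \<in> verts A" using free_sgd_edgesE(1)[OF t] .
  show "y \<in> verts A" using free_sgd_edgesE(2)[OF s] .
next
  fix S fv fe assume v: "sgd_val G A (S, fv, fe)"
  have S: "is_sgd S" using v G_sgd unfolding sgd_val_def by auto
  have g: "graph_hom A S fv fe" using v unfolding sgd_val_def by auto
  have a: "w (S, fv, fe) \<in> sgd_gen S (fe ` X)" "w' (S, fv, fe) \<in> sgd_gen S (fe ` X)"
    using free_sgd_edgesE(3)[OF s v] free_sgd_edgesE(3)[OF t v] by auto
  have b: "w (S, fv, fe) \<in> edges S" "w' (S, fv, fe) \<in> edges S" using a sgd_gen_sub[OF S g] by blast+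
  have c: "src S (w (S, fv, fe)) = tgt S (w' (S, fv, fe))"
    using free_sgd_edgesE(4)[OF s v] free_sgd_edgesE(5)[OF t v] xy by simp
  note m = is_sgdD[OF S b c]
  show "(if sgd_val G A (S, fv, fe) then mul (fst (S, fv, fe)) (w (S, fv, fe)) (w' (S, fv, fe)) else 0)
      \<in> sgd_gen S (fe ` X)" using v sgd_gen.mult[OF a c] by simp
  show "src S (if sgd_val G A (S, fv, fe) then mul (fst (S, fv, fe)) (w (S, fv, fe)) (w' (S, fv, fe)) else 0) = fv x'"
    using v m free_sgd_edgesE(4)[OF t v] by simp
  show "tgt S (if sgd_val G A (S, fv, fe) then mul (fst (S, fv, fe)) (w (S, fv, fe)) (w' (S, fv, fe)) else 0) = fv y"
    using v m free_sgd_edgesE(5)[OF s v] by simp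
next
  fix v assume "\<not> sgd_val G A v"
  then show "(if sgd_val G A v then mul (fst v) (w v) (w' v) else 0) = 0" by simp
next
  fix S fv fe T gv ge hv he
  assume v: "sgd_val G A (S, fv, fe)" and v2: "sgd_val G A (T, gv, ge)" and h: "sgd_hom S T hv he"
    and hv: "\<forall>x\<in>verts A. hv (fv x) = gv x" and he: "\<forall>e\<in>edges A. he (fe e) = ge e"
  have S: "is_sgd S" using v G_sgd unfolding sgd_val_def by auto
  have g: "graph_hom A S fv fe" using v unfolding sgd_val_def by auto
  have a: "w (S, fv, fe) \<in> sgd_gen S (fe ` X)" "w' (S, fv, fe) \<in> sgd_gen S (fe ` X)"
    using free_sgd_edgesE(3)[OF s v] free_sgd_edgesE(3)[OF t v] by auto
  have b: "w (S, fv, fe) \<in> edges S" "w' (S, fv, fe) \<in> edges S" using a sgd_gen_sub[OF S g] by blast+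
  have c: "src S (w (S, fv, fe)) = tgt S (w' (S, fv, fe))"
    using free_sgd_edgesE(4)[OF s v] free_sgd_edgesE(5)[OF t v] xy by simp
  have "he (mul S (w (S, fv, fe)) (w' (S, fv, fe))) = mul T (he (w (S, fv, fe))) (he (w' (S, fv, fe)))"
    using h b c unfolding sgd_hom_def by blast
  also have "\<dots> = mul T (w (T, gv, ge)) (w' (T, gv, ge))"
    using free_sgd_edgesE(7)[OF s v v2 h hv he] free_sgd_edgesE(7)[OF t v v2 h hv he] by simp
  finally show "he (if sgd_val G A (S, fv, fe) then mul (fst (S, fv, fe)) (w (S, fv, fe)) (w' (S, fv, fe)) else 0) =
       (if sgd_val G A (T, gv, ge) then mul (fst (T, gv, ge)) (w (T, gv, ge)) (w' (T, gv, ge)) else 0)"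
    using v v2 by simp
qed

lemma iota_mul:
  assumes s: "(x, y, w) \<in> E" and t: "(x', y', w') \<in> E"
  shows "iota (free_sgd_mul G A (x, y, w) (x', y', w')) = free_sg_mul V X (iota (x, y, w)) (iota (x', y', w'))"
proof
  fix v
  show "iota (free_sgd_mul G A (x, y, w) (x', y', w')) v = free_sg_mul V X (iota (x, y, w)) (iota (x', y', w')) v"
  proof (cases "sg_val V X v")
    case True
    obtain S \<phi> where v': "v = (S, \<phi>)" by (cases v)
    have "sgd_val G A (sg_as_sgd S, \<lambda>_. 0, \<phi>)" using sgval_sgd True v' by blast
    then show ?thesis using True v' by (simp add: iota_def free_sgd_mul_def free_sg_mul_def sg_as_sgd_def)
  next
    case False
    then show ?thesis by (simp add: iota_def free_sg_mul_def)
  qed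
qed

end

context mt begin

definition SB where "SB = (SOME S. S \<in> V \<and> sg_iso S B2)"

lemma SB: "SB \<in> V \<and> sg_iso SB B2"
proof -
  have "\<exists>S. S \<in> V \<and> sg_iso S B2" using B2V unfolding contains_B2_def by blast
  then show ?thesis unfolding SB_def by (rule someI_ex)
qed

definition hB where "hB = (SOME h. bij_betw h (fst SB) (fst B2) \<and> sg_hom SB B2 h)"

lemma hB: "bij_betw hB (fst SB) (fst B2) \<and> sg_hom SB B2 hB"
proof -
  have "\<exists>h. bij_betw h (fst SB) (fst B2) \<and> sg_hom SB B2 h" using SB unfolding sg_iso_def by blast
  then show ?thesis unfolding hB_def by (rule someI_ex)
qed

definition gB where "gB = inv_into (fst SB) hB"

lemma fst_B2: "fst B2 = UNIV" by (simp add: B2_def)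

lemma finSB: "fin_sg SB" using pvar_fin[OF V] SB by blast

lemma gB_in: "gB z \<in> fst SB"
  unfolding gB_def by (rule inv_into_into) (use hB fst_B2 in \<open>auto simp: bij_betw_def\<close>)

lemma hB_gB: "hB (gB z) = z"
  unfolding gB_def by (rule f_inv_into_f) (use hB fst_B2 in \<open>auto simp: bij_betw_def\<close>)

lemma gB_hB: "s \<in> fst SB \<Longrightarrow> gB (hB s) = s"
  unfolding gB_def by (rule inv_into_f_f) (use hB in \<open>auto simp: bij_betw_def\<close>)

lemma gB_inj: "gB z1 = gB z2 \<Longrightarrow> z1 = z2"
  by (metis hB_gB)

lemma gB_mul: "gB (snd B2 z1 z2) = snd SB (gB z1) (gB z2)"
proof -
  let ?p = "snd SB (gB z1) (gB z2)"
  have p: "?p \<in> fst SB" using finSB gB_in unfolding fin_sg_def by blast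
  have "hB ?p = snd B2 (hB (gB z1)) (hB (gB z2))" using hB gB_in unfolding sg_hom_def sg_hom_on_def by blast
  then have "hB ?p = snd B2 z1 z2" by (simp add: hB_gB)
  then show ?thesis using gB_hB[OF p] by metis
qed

definition beta where "beta x = (\<lambda>a. gB (Some (tgt A a = x, src A a = x)))"

lemma beta_val: "sg_val V X (SB, beta x)"
  using SB gB_in unfolding sg_val_def beta_def by auto

lemma iota_beta:
  assumes s: "(x0, y, w) \<in> E" and x: "x \<in> verts A"
  shows "iota (x0, y, w) (SB, beta x) = gB (Some (y = x, x0 = x))"
proof -
  define fvK :: "'v \<Rightarrow> nat" where "fvK = (\<lambda>v. if v = x then 1 else 0)"
  define feK where "feK = (\<lambda>a. 2 * fvK (tgt A a) + fvK (src A a))"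
  define he where "he = (\<lambda>e::nat. gB (Some (e div 2 = 1, e mod 2 = 1)))"
  have vK: "sgd_val G A (Kc, fvK, feK)"
    unfolding sgd_val_def graph_hom_def using Kc_gV by (auto simp: Kc_def fvK_def feK_def)
  have vS: "sgd_val G A (sg_as_sgd SB, \<lambda>_. 0, beta x)" by (rule sgval_sgd[OF beta_val])
  have hom: "sgd_hom Kc (sg_as_sgd SB) (\<lambda>_. 0) he"
    unfolding sgd_hom_def graph_hom_def
  proof (intro conjI ballI impI)
    show "\<And>e. e \<in> edges Kc \<Longrightarrow> he e \<in> edges (sg_as_sgd SB)" by (simp add: he_def sg_as_sgd_def gB_in)
    fix s t assume st: "s \<in> edges Kc" "t \<in> edges Kc" "src Kc s = tgt Kc t"
    then have "s mod 2 = t div 2" by (simp add: Kc_def)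
    then show "he (mul Kc s t) = mul (sg_as_sgd SB) (he s) (he t)"
      by (simp add: he_def Kc_def sg_as_sgd_def gB_mul[symmetric] B2_mul)
  qed (auto simp: sg_as_sgd_def)
  have "he (w (Kc, fvK, feK)) = w (sg_as_sgd SB, \<lambda>_. 0, beta x)"
    by (rule free_sgd_edgesE(7)[OF s vK vS hom]) (auto simp: he_def feK_def fvK_def beta_def)
  moreover have "w (Kc, fvK, feK) \<in> edges Kc"
    using free_sgd_edgesE(3)[OF s vK] sgd_gen_sub[OF G_sgd[OF Kc_gV]] vK unfolding sgd_val_def by auto
  then have "w (Kc, fvK, feK) = 2 * fvK y + fvK x0"
    using Kc_edge free_sgd_edgesE(4,5)[OF s vK] by metis
  ultimately have "w (sg_as_sgd SB, \<lambda>_. 0, beta x) = gB (Some (y = x, x0 = x))"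
    by (cases "y = x"; cases "x0 = x"; simp add: he_def fvK_def)
  then show ?thesis using beta_val by (simp add: iota_def)
qed

end

context mt begin

definition dS :: "(nat, nat) sgd \<Rightarrow> nat sg" where
  "dS C = (SOME S. S \<in> V \<and> (\<exists>f \<tau>. divrel C (sg_as_sgd S) f \<tau>))"
definition dT :: "(nat, nat) sgd \<Rightarrow> (nat \<times> nat) set" where
  "dT C = (SOME \<tau>. \<exists>f. divrel C (sg_as_sgd (dS C)) f \<tau>)"

lemma dST: assumes "C \<in> G" shows "dS C \<in> V" "\<exists>f. divrel C (sg_as_sgd (dS C)) f (dT C)"
proof -
  have "C \<in> Dcl V" using gV_Dcl[OF V] assms by blast
  then have "\<exists>S. S \<in> V \<and> (\<exists>f \<tau>. divrel C (sg_as_sgd S) f \<tau>)" unfolding Dcl_def sgd_divides_iff by blast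
  then have 1: "dS C \<in> V \<and> (\<exists>f \<tau>. divrel C (sg_as_sgd (dS C)) f \<tau>)" unfolding dS_def by (rule someI_ex)
  then show "dS C \<in> V" by blast
  from 1 have "\<exists>\<tau> f. divrel C (sg_as_sgd (dS C)) f \<tau>" by blast
  then show "\<exists>f. divrel C (sg_as_sgd (dS C)) f (dT C)" unfolding dT_def by (rule someI_ex)
qed

definition lf :: "('v, 'e) sgd_val \<Rightarrow> 'e \<Rightarrow> nat" where
  "lf v = (\<lambda>a. SOME t. (snd (snd v) a, t) \<in> dT (fst v))"

definition dval :: "('v, 'e) sgd_val \<Rightarrow> nat sg \<times> ('e \<Rightarrow> nat)" where
  "dval v = (dS (fst v), lf v)"

lemma lf: assumes v: "sgd_val G A (C, fv, fe)" and a: "a \<in> X"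
  shows "(fe a, lf (C, fv, fe) a) \<in> dT C"
proof -
  have C: "C \<in> G" and g: "graph_hom A C fv fe" using v unfolding sgd_val_def by auto
  obtain f where d: "divrel C (sg_as_sgd (dS C)) f (dT C)" using dST[OF C] by blast
  have "fe a \<in> edges C" using g a unfolding graph_hom_def by auto
  then have "\<exists>t. (fe a, t) \<in> dT C" using divrelD(2)[OF d] by blast
  then have "(fe a, SOME t. (fe a, t) \<in> dT C) \<in> dT C" by (rule someI_ex)
  then show ?thesis unfolding lf_def by simp
qed

lemma dval_val: assumes v: "sgd_val G A (C, fv, fe)" shows "sg_val V X (dval (C, fv, fe))"
proof -
  have C: "C \<in> G" using v unfolding sgd_val_def by auto
  obtain f where d: "divrel C (sg_as_sgd (dS C)) f (dT C)" using dST[OF C] by blast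
  have "lf (C, fv, fe) a \<in> fst (dS C)" if "a \<in> X" for a
    using divrelD(4)[OF d lf[OF v that]] by (simp add: sg_as_sgd_def)
  then show ?thesis using dST(1)[OF C] unfolding sg_val_def dval_def by auto
qed

lemma det:
  assumes s: "(x0, y, w) \<in> E" and v: "sgd_val G A (C, fv, fe)"
  shows "(w (C, fv, fe), iota (x0, y, w) (dval (C, fv, fe))) \<in> dT C"
proof -
  have C: "C \<in> G" and g: "graph_hom A C fv fe" using v unfolding sgd_val_def by auto
  let ?S = "dS C" and ?\<tau> = "dT C" and ?\<phi> = "lf (C, fv, fe)"
  obtain f where d: "divrel C (sg_as_sgd ?S) f ?\<tau>" using dST[OF C] by blast
  have SV: "?S \<in> V" using dST[OF C] by blast
  have finS: "fin_sg ?S" using pvar_fin[OF V SV] .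
  let ?P = "sgdprod_nat C (sg_as_sgd ?S)"
  have P: "?P \<in> G"
    by (rule gV_prod[OF fin_sgd_sgdprod_nat[OF G_fin[OF C] fin_sgd_sg_as_sgd[OF finS]] C gV_sg[OF SV]
          sgd_iso_sgdprod_nat])
  define fvP where "fvP = (\<lambda>x. enc (fv x, 0::nat))"
  define feP where "feP = (\<lambda>a. enc (fe a, ?\<phi> a))"
  have phi: "?\<phi> a \<in> fst ?S" if "a \<in> X" for a
    using divrelD(4)[OF d lf[OF v that]] by (simp add: sg_as_sgd_def)
  have vP: "sgd_val G A (?P, fvP, feP)"
    unfolding sgd_val_def graph_hom_def using P g phi
    by (auto simp: graph_hom_def sgdprod_nat_def fvP_def feP_def sg_as_sgd_def)
  have gen: "dec z \<in> ?\<tau>" if "z \<in> sgd_gen ?P (feP ` X)" for z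
    using that
  proof (induction rule: sgd_gen.induct)
    case (base e)
    then obtain a where "a \<in> X" "e = feP a" by blast
    then show ?case using lf[OF v] by (simp add: feP_def)
  next
    case (mult z1 z2)
    obtain c1 s1 where 1: "dec z1 = (c1, s1)" by (cases "dec z1")
    obtain c2 s2 where 2: "dec z2 = (c2, s2)" by (cases "dec z2")
    have "enc (src C c1, 0) = enc (tgt C c2, 0)" using mult.hyps(3) 1 2
      by (simp add: sgdprod_nat_def sg_as_sgd_def)
    then have "src C c1 = tgt C c2" by (metis dec_enc prod.inject)
    then have "(mul C c1 c2, mul (sg_as_sgd ?S) s1 s2) \<in> ?\<tau>"
      using divrelD(7)[OF d] mult.IH 1 2 by simp
    then show ?case using 1 2 by (simp add: sgdprod_nat_def)
  qed
  have wP: "dec (w (?P, fvP, feP)) \<in> ?\<tau>" using gen free_sgd_edgesE(3)[OF s vP] by blast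
  have "fst (dec (w (?P, fvP, feP))) = w (C, fv, fe)"
    by (rule free_sgd_edgesE(7)[OF s vP v sgdprod_nat_hom1]) (auto simp: fvP_def feP_def)
  moreover have "snd (dec (w (?P, fvP, feP))) = w (sg_as_sgd ?S, \<lambda>_. 0, ?\<phi>)"
  proof (rule free_sgd_edgesE(7)[OF s vP _ sgdprod_nat_hom2])
    show "sgd_val G A (sg_as_sgd (dS C), \<lambda>_. 0, lf (C, fv, fe))"
      using sgval_sgd dval_val[OF v] by (simp add: dval_def)
  qed (auto simp: fvP_def feP_def)
  moreover have "iota (x0, y, w) (dval (C, fv, fe)) = w (sg_as_sgd ?S, \<lambda>_. 0, ?\<phi>)"
    using dval_val[OF v] by (simp add: iota_def dval_def)
  ultimately show ?thesis using wP by (metis prod.collapse)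
qed

lemma det_unique:
  assumes s: "(x0, y, w) \<in> E" and s': "(x0, y, w') \<in> E" and v: "sgd_val G A (C, fv, fe)"
    and eq: "iota (x0, y, w) (dval (C, fv, fe)) = iota (x0, y, w') (dval (C, fv, fe))"
  shows "w (C, fv, fe) = w' (C, fv, fe)"
proof -
  have C: "C \<in> G" using v unfolding sgd_val_def by auto
  obtain f where d: "divrel C (sg_as_sgd (dS C)) f (dT C)" using dST[OF C] by blast
  show ?thesis
    using divrelD(8)[OF d det[OF s v] det[OF s' v]] eq
      free_sgd_edgesE(4,5)[OF s v] free_sgd_edgesE(4,5)[OF s' v] by simp
qed

lemma endpoints:
  assumes s: "(x0, y, w) \<in> E" and s': "(x0', y', w') \<in> E"
    and e1: "iota (x0', y', w') (SB, beta x0) = iota (x0, y, w) (SB, beta x0)"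
    and e2: "iota (x0', y', w') (SB, beta y) = iota (x0, y, w) (SB, beta y)"
  shows "x0' = x0 \<and> y' = y"
proof -
  have x: "x0 \<in> verts A" "y \<in> verts A" using free_sgd_edgesE(1,2)[OF s] by auto
  have "Some (y' = x0, x0' = x0) = Some (y = x0, x0 = x0)"
    using e1 iota_beta[OF s x(1)] iota_beta[OF s' x(1)] gB_inj by metis
  moreover have "Some (y' = y, x0' = y) = Some (y = y, x0 = y)"
    using e2 iota_beta[OF s x(2)] iota_beta[OF s' x(2)] gB_inj by metis
  ultimately show ?thesis by auto
qed

lemma iota_inj:
  assumes s: "(x0, y, w) \<in> E" and s': "(x0', y', w') \<in> E" and eq: "iota (x0', y', w') = iota (x0, y, w)"
  shows "(x0', y', w') = (x0, y, w)"
proof -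
  have xy: "x0' = x0 \<and> y' = y" using endpoints[OF s s'] eq by simp
  have "w' = w"
  proof
    fix v show "w' v = w v"
    proof (cases "sgd_val G A v")
      case True
      obtain C fv fe where v: "v = (C, fv, fe)" by (cases v)
      show ?thesis using det_unique[OF s'[unfolded xy[THEN conjunct1] xy[THEN conjunct2]] s] True v eq xy by simp
    next
      case False
      then show ?thesis using free_sgd_edgesE(6)[OF s] free_sgd_edgesE(6)[OF s'] by simp
    qed
  qed
  then show ?thesis using xy by simp
qed

lemma nb_det:
  assumes s: "(x0, y, w) \<in> E" and F: "finite F"
  shows "\<exists>Gs. finite Gs \<and> (\<forall>x0' y' w'. (x0', y', w') \<in> E \<longrightarrow>
           (\<forall>g\<in>Gs. iota (x0', y', w') g = iota (x0, y, w) g) \<longrightarrow>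
           x0' = x0 \<and> y' = y \<and> (\<forall>v\<in>F. w' v = w v))"
proof (intro exI[of _ "{(SB, beta x0), (SB, beta y)} \<union> dval ` F"] conjI allI impI)
  show "finite ({(SB, beta x0), (SB, beta y)} \<union> dval ` F)" using F by simp
  fix x0' y' w'
  assume s': "(x0', y', w') \<in> E"
    and eq: "\<forall>g\<in>{(SB, beta x0), (SB, beta y)} \<union> dval ` F. iota (x0', y', w') g = iota (x0, y, w) g"
  have xy: "x0' = x0 \<and> y' = y" using endpoints[OF s s'] eq by simp
  then show "x0' = x0" "y' = y" by auto
  show "\<forall>v\<in>F. w' v = w v"
  proof
    fix v assume vF: "v \<in> F"
    show "w' v = w v"
    proof (cases "sgd_val G A v")
      case True
      obtain C fv fe where v: "v = (C, fv, fe)" by (cases v)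
      show ?thesis using det_unique[OF s'[unfolded xy[THEN conjunct1] xy[THEN conjunct2]] s] True v eq xy vF
        by simp
    next
      case False
      then show ?thesis using free_sgd_edgesE(6)[OF s] free_sgd_edgesE(6)[OF s'] by simp
    qed
  qed
qed

end

context mt begin

lemma path_word:
  assumes s: "(x0, y, w) \<in> E" and u: "u \<in> free_sg V X"
    and ub: "\<forall>x\<in>verts A. u (SB, beta x) = iota (x0, y, w) (SB, beta x)"
    and vs: "\<forall>v\<in>set vs. sg_val V X v"
  shows "\<exists>a l. a \<in> X \<and> set l \<subseteq> X \<and> apath A a l \<and> tgt A a = y \<and> src A (last (a # l)) = x0 \<and>
     (\<forall>v\<in>set vs. u v = wev (snd (fst v)) (snd v) a l)"
proof -
  obtain xs where xs: "set xs = verts A" using finite_list[OF finA] by blast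
  let ?vs = "vs @ map (\<lambda>x. (SB, beta x)) xs"
  have "\<forall>v\<in>set ?vs. sg_val V X v" using vs beta_val by auto
  then obtain a l where al: "a \<in> X" "set l \<subseteq> X" "\<forall>v\<in>set ?vs. u v = wev (snd (fst v)) (snd v) a l"
    using free_sg_word[OF V u] by blast
  have xy: "x0 \<in> verts A" "y \<in> verts A" using free_sgd_edgesE(1,2)[OF s] by auto
  have key: "bchain (\<lambda>e. tgt A e = x) (\<lambda>e. src A e = x) a l \<and> (tgt A a = x) = (y = x) \<and>
      (src A (last (a # l)) = x) = (x0 = x)" if x: "x \<in> verts A" for x
  proof -
    have "u (SB, beta x) = wev (snd SB) (beta x) a l" using al(3) x xs by auto
    then have "hB (u (SB, beta x)) = wev (snd B2) (\<lambda>e. Some (tgt A e = x, src A e = x)) a l"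
      using wev_hom[OF finSB conjunct2[OF hB], of "beta x" X "\<lambda>e. Some (tgt A e = x, src A e = x)" a l]
        al(1,2) gB_in hB_gB by (auto simp: beta_def)
    also have "\<dots> = (if bchain (\<lambda>e. tgt A e = x) (\<lambda>e. src A e = x) a l
        then Some (tgt A a = x, src A (last (a # l)) = x) else None)" by (rule wev_B2)
    finally have 1: "hB (u (SB, beta x)) = \<dots>" .
    have "hB (u (SB, beta x)) = Some (y = x, x0 = x)" using ub x iota_beta[OF s x] hB_gB by simp
    with 1 show ?thesis by (auto split: if_splits)
  qed
  have "apath A a l" by (rule bchain_apath[OF graph al(1,2)]) (use key in blast)
  moreover have "tgt A a = y" using key[OF xy(2)] by simp
  moreover have "src A (last (a # l)) = x0" using key[OF xy(1)] by simp
  moreover have "\<forall>v\<in>set vs. u v = wev (snd (fst v)) (snd v) a l" using al(3) by simp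
  ultimately show ?thesis using al(1,2) by blast
qed

definition lw :: "('v, 'e) sgd_val \<Rightarrow> 'v \<Rightarrow> 'v \<Rightarrow> (nat sg \<times> ('e \<Rightarrow> nat) \<Rightarrow> nat) \<Rightarrow> nat" where
  "lw v x0 y u = (if sgd_val G A v then (THE c. c \<in> edges (fst v) \<and> src (fst v) c = fst (snd v) x0 \<and>
      tgt (fst v) c = fst (snd v) y \<and> (c, u (dval v)) \<in> dT (fst v)) else 0)"

lemma lw_eq:
  assumes v: "sgd_val G A (C, fv, fe)" and al: "a \<in> X" "set l \<subseteq> X" "apath A a l" "tgt A a = y"
    "src A (last (a # l)) = x0" and uv: "u (dval (C, fv, fe)) = wev (snd (dS C)) (lf (C, fv, fe)) a l"
  shows "lw (C, fv, fe) x0 y u = wev (mul C) fe a l"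
proof -
  have C: "C \<in> G" and g: "graph_hom A C fv fe" using v unfolding sgd_val_def by auto
  obtain f where d: "divrel C (sg_as_sgd (dS C)) f (dT C)" using dST[OF C] by blast
  let ?c = "wev (mul C) fe a l"
  have c: "?c \<in> edges C" "src C ?c = fv x0" "tgt C ?c = fv y"
    using wev_sgd[OF G_sgd[OF C] g al(1-3)] al(4,5) by auto
  have ct: "(?c, u (dval (C, fv, fe))) \<in> dT C"
    using wev_sgd_tau[OF G_sgd[OF C] g d lf[OF v] al(1-3)] uv by simp
  have "(THE c. c \<in> edges C \<and> src C c = fv x0 \<and> tgt C c = fv y \<and> (c, u (dval (C, fv, fe))) \<in> dT C) = ?c"
  proof (rule the_equality)
    show "?c \<in> edges C \<and> src C ?c = fv x0 \<and> tgt C ?c = fv y \<and> (?c, u (dval (C, fv, fe))) \<in> dT C"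
      using c ct by blast
    fix c' assume "c' \<in> edges C \<and> src C c' = fv x0 \<and> tgt C c' = fv y \<and> (c', u (dval (C, fv, fe))) \<in> dT C"
    then show "c' = ?c" using divrelD(8)[OF d _ ct] c by auto
  qed
  then show ?thesis using v by (simp add: lw_def)
qed

lemma lift:
  assumes s: "(x0, y, w) \<in> E" and u: "u \<in> free_sg V X"
    and ub: "\<forall>x\<in>verts A. u (SB, beta x) = iota (x0, y, w) (SB, beta x)"
  shows "(x0, y, \<lambda>v. lw v x0 y u) \<in> E \<and> iota (x0, y, \<lambda>v. lw v x0 y u) = u"
proof
  note pw = path_word[OF s u ub]
  have lwv: "\<exists>a l. a \<in> X \<and> set l \<subseteq> X \<and> apath A a l \<and> tgt A a = y \<and> src A (last (a # l)) = x0 \<and>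
     lw (C, fv, fe) x0 y u = wev (mul C) fe a l \<and> (\<forall>v\<in>set vs. u v = wev (snd (fst v)) (snd v) a l)"
    if v: "sgd_val G A (C, fv, fe)" and vs: "\<forall>v\<in>set vs. sg_val V X v" for C fv fe vs
  proof -
    obtain a l where al: "a \<in> X" "set l \<subseteq> X" "apath A a l" "tgt A a = y" "src A (last (a # l)) = x0"
      "\<forall>v\<in>set (dval (C, fv, fe) # vs). u v = wev (snd (fst v)) (snd v) a l"
      using pw[of "dval (C, fv, fe) # vs"] dval_val[OF v] vs by auto
    have "lw (C, fv, fe) x0 y u = wev (mul C) fe a l"
      by (rule lw_eq[OF v al(1-5)]) (use al(6) in \<open>simp add: dval_def\<close>)
    moreover have "\<forall>v\<in>set vs. u v = wev (snd (fst v)) (snd v) a l" using al(6) by simp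
    ultimately show ?thesis using al(1-5) by blast
  qed
  show "(x0, y, \<lambda>v. lw v x0 y u) \<in> E"
  proof (rule free_sgd_edgesI)
    show "x0 \<in> verts A" "y \<in> verts A" using free_sgd_edgesE(1,2)[OF s] by auto
  next
    fix C fv fe assume v: "sgd_val G A (C, fv, fe)"
    have C: "C \<in> G" and g: "graph_hom A C fv fe" using v unfolding sgd_val_def by auto
    obtain a l where al: "a \<in> X" "set l \<subseteq> X" "apath A a l" "tgt A a = y" "src A (last (a # l)) = x0"
      "lw (C, fv, fe) x0 y u = wev (mul C) fe a l" using lwv[OF v, of "[]"] by auto
    note ws = wev_sgd[OF G_sgd[OF C] g al(1-3)]
    show "lw (C, fv, fe) x0 y u \<in> sgd_gen C (fe ` X)" using ws al(6) by simp
    show "src C (lw (C, fv, fe) x0 y u) = fv x0" using ws al(5,6) by simp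
    show "tgt C (lw (C, fv, fe) x0 y u) = fv y" using ws al(4,6) by simp
  next
    fix v assume "\<not> sgd_val G A v" then show "lw v x0 y u = 0" by (simp add: lw_def)
  next
    fix S fv fe T gv ge hv he
    assume v: "sgd_val G A (S, fv, fe)" and v2: "sgd_val G A (T, gv, ge)" and h: "sgd_hom S T hv he"
      and hv: "\<forall>x\<in>verts A. hv (fv x) = gv x" and he: "\<forall>e\<in>edges A. he (fe e) = ge e"
    have S: "S \<in> G" and g: "graph_hom A S fv fe" using v unfolding sgd_val_def by auto
    obtain a l where al: "a \<in> X" "set l \<subseteq> X" "apath A a l" "tgt A a = y" "src A (last (a # l)) = x0"
      "lw (S, fv, fe) x0 y u = wev (mul S) fe a l"
      "\<forall>v\<in>set [dval (T, gv, ge)]. u v = wev (snd (fst v)) (snd v) a l"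
      using lwv[OF v, of "[dval (T, gv, ge)]"] dval_val[OF v2] by auto
    have "lw (T, gv, ge) x0 y u = wev (mul T) ge a l"
      by (rule lw_eq[OF v2 al(1-5)]) (use al(7) in \<open>simp add: dval_def\<close>)
    moreover have "he (wev (mul S) fe a l) = wev (mul T) ge a l"
      by (rule wev_sgd_hom[OF G_sgd[OF S] g h _ al(1-3)]) (use he in blast)
    ultimately show "he (lw (S, fv, fe) x0 y u) = lw (T, gv, ge) x0 y u" using al(6) by simp
  qed
  show "iota (x0, y, \<lambda>v. lw v x0 y u) = u"
  proof
    fix g show "iota (x0, y, \<lambda>v. lw v x0 y u) g = u g"
    proof (cases "sg_val V X g")
      case True
      obtain S \<phi> where g: "g = (S, \<phi>)" by (cases g)
      have v: "sgd_val G A (sg_as_sgd S, \<lambda>_. 0, \<phi>)" using sgval_sgd True g by blast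
      obtain a l where al: "lw (sg_as_sgd S, \<lambda>_. 0, \<phi>) x0 y u = wev (mul (sg_as_sgd S)) \<phi> a l"
        "u (S, \<phi>) = wev (snd S) \<phi> a l"
        using lwv[OF v, of "[(S, \<phi>)]"] True g by auto
      show ?thesis using True g al by (simp add: iota_def sg_as_sgd_def)
    next
      case False
      then show ?thesis using free_sgE(2)[OF u] by (simp add: iota_def)
    qed
  qed
qed

end

lemma gen_top_fin_inter:
  assumes "T \<in> B" "finite F" "F \<subseteq> B"
  shows "openin (topology_generated_by B) (T \<inter> \<Inter>F)"
  using assms(2,3)
proof (induction F rule: finite_induct)
  case empty then show ?case using topology_generated_by_Basis[OF assms(1)] by simp
next
  case (insert b F)
  have "T \<inter> \<Inter>(insert b F) = b \<inter> (T \<inter> \<Inter>F)" by auto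
  then show ?case using insert topology_generated_by_Basis[of b B] by (simp add: openin_Int)
qed

lemma gen_top_open_D:
  assumes "T \<in> B" "\<forall>b\<in>B. b \<subseteq> T" "openin (topology_generated_by B) N"
  shows "N \<subseteq> T \<and> (\<forall>p\<in>N. \<exists>F. finite F \<and> F \<subseteq> B \<and> p \<in> \<Inter>F \<and> T \<inter> \<Inter>F \<subseteq> N)"
proof -
  have "generate_topology_on B N" using assms(3) by (rule openin_topology_generated_by)
  then show ?thesis
  proof (induction rule: generate_topology_on.induct)
    case Empty then show ?case by simp
  next
    case (Int a b)
    show ?case
    proof (intro conjI ballI)
      show "a \<inter> b \<subseteq> T" using Int by blast
      fix p assume p: "p \<in> a \<inter> b"
      then have pa: "p \<in> a" "p \<in> b" by auto
      obtain F1 where "finite F1" "F1 \<subseteq> B" "p \<in> \<Inter>F1" "T \<inter> \<Inter>F1 \<subseteq> a"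
        using Int.IH(1) pa(1) by blast
      moreover obtain F2 where "finite F2" "F2 \<subseteq> B" "p \<in> \<Inter>F2" "T \<inter> \<Inter>F2 \<subseteq> b"
        using Int.IH(2) pa(2) by blast
      ultimately show "\<exists>F. finite F \<and> F \<subseteq> B \<and> p \<in> \<Inter>F \<and> T \<inter> \<Inter>F \<subseteq> a \<inter> b"
        by (intro exI[of _ "F1 \<union> F2"]) auto
    qed
  next
    case (UN K)
    show ?case
    proof (intro conjI ballI)
      show "\<Union>K \<subseteq> T" using UN.IH by (meson Sup_least)
      fix p assume "p \<in> \<Union>K"
      then obtain k where k: "k \<in> K" "p \<in> k" by blast
      note ih = UN.IH[OF k(1)]
      have ex: "\<exists>F. finite F \<and> F \<subseteq> B \<and> p \<in> \<Inter>F \<and> T \<inter> \<Inter>F \<subseteq> k"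
        using bspec[OF ih[THEN conjunct2] k(2)] .
      have "k \<subseteq> \<Union>K" using k(1) by (rule Union_upper)
      then show "\<exists>F. finite F \<and> F \<subseteq> B \<and> p \<in> \<Inter>F \<and> T \<inter> \<Inter>F \<subseteq> \<Union>K" using ex
        by (meson order_trans)
    qed
  next
    case (Basis s)
    then show ?case using assms(2) by (intro conjI ballI, blast) (intro exI[of _ "{s}"], auto)
  qed
qed

section \<open>The two concrete topologies\<close>

lemma sgtop_space: "topspace (free_sg_top V X) = free_sg V X"
  unfolding free_sg_top_def topology_generated_by_topspace by auto

lemma sgtop_open_nb:
  assumes "finite Gs"
  shows "openin (free_sg_top V X) {u \<in> free_sg V X. \<forall>g\<in>Gs. u g = u0 g}"
proof -
  let ?B = "insert (free_sg V X) {{w \<in> free_sg V X. w v = n} | v n. True}"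
  let ?F = "(\<lambda>g. {w \<in> free_sg V X. w g = u0 g}) ` Gs"
  have "openin (topology_generated_by ?B) (free_sg V X \<inter> \<Inter>?F)"
    by (rule gen_top_fin_inter) (use assms in auto)
  moreover have "free_sg V X \<inter> \<Inter>?F = {u \<in> free_sg V X. \<forall>g\<in>Gs. u g = u0 g}" by auto
  ultimately show ?thesis unfolding free_sg_top_def by simp
qed

lemma sgtop_nb:
  assumes "openin (free_sg_top V X) N" "p \<in> N"
  shows "\<exists>Gs. finite Gs \<and> {u \<in> free_sg V X. \<forall>g\<in>Gs. u g = p g} \<subseteq> N"
proof -
  let ?B = "insert (free_sg V X) {{w \<in> free_sg V X. w v = n} | v n. True}"
  have B1: "\<forall>b\<in>?B. b \<subseteq> free_sg V X" by auto
  have "N \<subseteq> free_sg V X \<and> (\<forall>p\<in>N. \<exists>F. finite F \<and> F \<subseteq> ?B \<and> p \<in> \<Inter>F \<and> free_sg V X \<inter> \<Inter>F \<subseteq> N)"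
    by (rule gen_top_open_D[OF insertI1 B1]) (use assms(1) in \<open>simp add: free_sg_top_def\<close>)
  then have "\<exists>F. finite F \<and> F \<subseteq> ?B \<and> p \<in> \<Inter>F \<and> free_sg V X \<inter> \<Inter>F \<subseteq> N" using assms(2) by blast
  then obtain F where F: "finite F" "F \<subseteq> ?B" "p \<in> \<Inter>F" "free_sg V X \<inter> \<Inter>F \<subseteq> N"
    by blast
  have "\<forall>b\<in>F. \<exists>g. b = free_sg V X \<or> b = {w \<in> free_sg V X. w g = p g}"
  proof
    fix b assume b: "b \<in> F"
    then have "b = free_sg V X \<or> (\<exists>v n. b = {w \<in> free_sg V X. w v = n})" using F(2) by blast
    then show "\<exists>g. b = free_sg V X \<or> b = {w \<in> free_sg V X. w g = p g}"
    proof
      assume "\<exists>v n. b = {w \<in> free_sg V X. w v = n}"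
      then obtain v n where bv: "b = {w \<in> free_sg V X. w v = n}" by blast
      then have "p v = n" using F(3) b by blast
      then show ?thesis using bv by blast
    qed blast
  qed
  from bchoice[OF this] obtain c where c: "\<forall>b\<in>F. b = free_sg V X \<or> b = {w \<in> free_sg V X. w (c b) = p (c b)}"
    by (elim exE)
  have "{u \<in> free_sg V X. \<forall>g\<in>c ` F. u g = p g} \<subseteq> free_sg V X \<inter> \<Inter>F"
  proof
    fix u assume u: "u \<in> {u \<in> free_sg V X. \<forall>g\<in>c ` F. u g = p g}"
    have "u \<in> b" if b: "b \<in> F" for b
    proof -
      have "c b \<in> c ` F" using b by blast
      then have "u (c b) = p (c b)" using u by blast
      then show ?thesis using bspec[OF c b] u by blast
    qed
    then show "u \<in> free_sg V X \<inter> \<Inter>F" using u by blast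
  qed
  then show ?thesis using F(1,4) by (intro exI[of _ "c ` F"]) auto
qed

definition NB :: "(nat, nat) sgd set \<Rightarrow> ('v, 'e) sgraph \<Rightarrow> ('v \<times> 'v \<times> (('v, 'e) sgd_val \<Rightarrow> nat))
     \<Rightarrow> ('v, 'e) sgd_val set \<Rightarrow> ('v \<times> 'v \<times> (('v, 'e) sgd_val \<Rightarrow> nat)) set" where
  "NB C A p F = {e \<in> free_sgd_edges C A. fst e = fst p \<and> fst (snd e) = fst (snd p) \<and>
      (\<forall>v\<in>F. snd (snd e) v = snd (snd p) v)}"

lemma sgdtop_open_nb:
  assumes "finite F"
  shows "openin (free_sgd_top C A) (NB C A p F)"
proof -
  let ?E = "free_sgd_edges C A"
  let ?B = "insert ?E
       ({{e \<in> ?E. fst e = x} | x. True} \<union>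
        {{e \<in> ?E. fst (snd e) = y} | y. True} \<union>
        {{e \<in> ?E. snd (snd e) v = n} | v n. True})"
  let ?F = "insert {e \<in> ?E. fst e = fst p} (insert {e \<in> ?E. fst (snd e) = fst (snd p)}
            ((\<lambda>v. {e \<in> ?E. snd (snd e) v = snd (snd p) v}) ` F))"
  have "openin (topology_generated_by ?B) (?E \<inter> \<Inter>?F)"
    by (rule gen_top_fin_inter) (use assms in blast)+
  moreover have "?E \<inter> \<Inter>?F = NB C A p F" unfolding NB_def by auto
  ultimately show ?thesis unfolding free_sgd_top_def by simp
qed

lemma sgdtop_nb:
  assumes "openin (free_sgd_top C A) N" "p \<in> N"
  shows "\<exists>F. finite F \<and> NB C A p F \<subseteq> N"
proof -
  let ?E = "free_sgd_edges C A"
  let ?B = "insert ?E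
       ({{e \<in> ?E. fst e = x} | x. True} \<union>
        {{e \<in> ?E. fst (snd e) = y} | y. True} \<union>
        {{e \<in> ?E. snd (snd e) v = n} | v n. True})"
  have B1: "\<forall>b\<in>?B. b \<subseteq> ?E" by auto
  have "N \<subseteq> ?E \<and> (\<forall>p\<in>N. \<exists>F. finite F \<and> F \<subseteq> ?B \<and> p \<in> \<Inter>F \<and> ?E \<inter> \<Inter>F \<subseteq> N)"
    by (rule gen_top_open_D[OF insertI1 B1]) (use assms(1) in \<open>simp add: free_sgd_top_def\<close>)
  then have "\<exists>F. finite F \<and> F \<subseteq> ?B \<and> p \<in> \<Inter>F \<and> ?E \<inter> \<Inter>F \<subseteq> N" using assms(2) by (elim conjE) (erule bspec)
  then obtain F where F0: "finite F \<and> F \<subseteq> ?B \<and> p \<in> \<Inter>F \<and> ?E \<inter> \<Inter>F \<subseteq> N"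
    by (elim exE)
  note F = F0[THEN conjunct1] F0[THEN conjunct2, THEN conjunct1] F0[THEN conjunct2, THEN conjunct2, THEN conjunct1]
    F0[THEN conjunct2, THEN conjunct2, THEN conjunct2]
  have "\<forall>b\<in>F. \<exists>v. b = ?E \<or> b = {e \<in> ?E. fst e = fst p} \<or> b = {e \<in> ?E. fst (snd e) = fst (snd p)} \<or>
     b = {e \<in> ?E. snd (snd e) v = snd (snd p) v}"
  proof
    fix b assume b: "b \<in> F"
    have pb: "p \<in> b" using F(3) b by blast
    have "b \<in> ?B" using F(2) b by (rule subsetD)
    then have "b = ?E \<or> (\<exists>x. b = {e \<in> ?E. fst e = x}) \<or> (\<exists>y. b = {e \<in> ?E. fst (snd e) = y}) \<or>
      (\<exists>v n. b = {e \<in> ?E. snd (snd e) v = n})" by simp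
    then show "\<exists>v. b = ?E \<or> b = {e \<in> ?E. fst e = fst p} \<or> b = {e \<in> ?E. fst (snd e) = fst (snd p)} \<or>
     b = {e \<in> ?E. snd (snd e) v = snd (snd p) v}"
    proof (elim disjE exE)
      fix x assume bx: "b = {e \<in> ?E. fst e = x}"
      then have "fst p = x" using pb by simp
      then show ?thesis using bx by blast
    next
      fix y assume bx: "b = {e \<in> ?E. fst (snd e) = y}"
      then have "fst (snd p) = y" using pb by simp
      then show ?thesis using bx by blast
    next
      fix v n assume bx: "b = {e \<in> ?E. snd (snd e) v = n}"
      then have "snd (snd p) v = n" using pb by simp
      then show ?thesis using bx by blast
    qed blast
  qed
  from bchoice[OF this] obtain c where c: "\<forall>b\<in>F. b = ?E \<or> b = {e \<in> ?E. fst e = fst p} \<or> b = {e \<in> ?E. fst (snd e) = fst (snd p)} \<or>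
     b = {e \<in> ?E. snd (snd e) (c b) = snd (snd p) (c b)}"
    by (elim exE)
  have "NB C A p (c ` F) \<subseteq> ?E \<inter> \<Inter>F"
  proof
    fix u assume u: "u \<in> NB C A p (c ` F)"
    have "u \<in> b" if b: "b \<in> F" for b
    proof -
      have "c b \<in> c ` F" using b by blast
      then have "snd (snd u) (c b) = snd (snd p) (c b)" "fst u = fst p" "fst (snd u) = fst (snd p)" "u \<in> ?E"
        using u unfolding NB_def by blast+
      then show ?thesis using bspec[OF c b] by blast
    qed
    then show "u \<in> ?E \<inter> \<Inter>F" using u unfolding NB_def by blast
  qed
  then show ?thesis using F(1,4) by (intro exI[of _ "c ` F"]) auto
qed


context mt begin

lemma iota_agree:
  assumes "(xz, yz, wz) \<in> NB G A (xq, yq, wq) ((\<lambda>h. (sg_as_sgd (fst h), (\<lambda>_. 0) :: 'v \<Rightarrow> nat, snd h)) ` H)"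
    and "h \<in> H"
  shows "iota (xz, yz, wz) h = iota (xq, yq, wq) h"
proof (cases "sg_val V X h")
  case True
  have "wz (sg_as_sgd (fst h), \<lambda>_. 0, snd h) = wq (sg_as_sgd (fst h), \<lambda>_. 0, snd h)"
    using assms unfolding NB_def by auto
  then show ?thesis using True by (simp add: iota_def)
next
  case False then show ?thesis by (simp add: iota_def)
qed

theorem main:
  assumes H: "free_sg_mult_open V X"
  shows "free_sgd_mult_open G A"
  unfolding free_sgd_mult_open_def open_map_def
proof (intro allI impI)
  fix U assume "openin (subtopology (prod_topology (free_sgd_top G A) (free_sgd_top G A)) (free_sgd_D G A)) U"
  then obtain W where W: "openin (prod_topology (free_sgd_top G A) (free_sgd_top G A)) W"
    "U = W \<inter> free_sgd_D G A" by (auto simp: openin_subtopology)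
  let ?f = "\<lambda>(s, t). free_sgd_mul G A s t"
  let ?m = "\<lambda>(u, w). free_sg_mul V X u w"
  show "openin (free_sgd_top G A) (?f ` U)"
  proof (subst openin_subopen, intro ballI)
    fix q assume "q \<in> ?f ` U"
    then obtain s t where st: "(s, t) \<in> U" "q = free_sgd_mul G A s t" by auto
    obtain x0 y0 w0 where s: "s = (x0, y0, w0)" by (cases s) auto
    obtain x1 y1 w1 where t: "t = (x1, y1, w1)" by (cases t) auto
    have sD: "(s, t) \<in> free_sgd_D G A" "(s, t) \<in> W" using st W by auto
    then have sE: "(x0, y0, w0) \<in> E" and tE: "(x1, y1, w1) \<in> E" and xy: "x0 = y1"
      unfolding free_sgd_D_def s t by auto
    have hW: "\<forall>x y. (x, y) \<in> W \<longrightarrow> (\<exists>U V. openin (free_sgd_top G A) U \<and> openin (free_sgd_top G A) V \<and>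
        x \<in> U \<and> y \<in> V \<and> U \<times> V \<subseteq> W)" using W(1) by (simp only: openin_prod_topology_alt)
    obtain N1 N2 where N0: "openin (free_sgd_top G A) N1 \<and> openin (free_sgd_top G A) N2 \<and> s \<in> N1 \<and> t \<in> N2 \<and>
      N1 \<times> N2 \<subseteq> W" using hW[rule_format, OF sD(2)] by (elim exE)
    note N = N0[THEN conjunct1] N0[THEN conjunct2, THEN conjunct1] N0[THEN conjunct2, THEN conjunct2, THEN conjunct1]
      N0[THEN conjunct2, THEN conjunct2, THEN conjunct2, THEN conjunct1] N0[THEN conjunct2, THEN conjunct2, THEN conjunct2, THEN conjunct2]
    obtain F1 where F1: "finite F1" "NB G A s F1 \<subseteq> N1" using sgdtop_nb[OF N(1,3)] by blast
    obtain F2 where F2: "finite F2" "NB G A t F2 \<subseteq> N2" using sgdtop_nb[OF N(2,4)] by blast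
    obtain Gs1 where G1: "finite Gs1" "\<forall>x0' y' w'. (x0', y', w') \<in> E \<longrightarrow>
           (\<forall>g\<in>Gs1. iota (x0', y', w') g = iota (x0, y0, w0) g) \<longrightarrow>
           x0' = x0 \<and> y' = y0 \<and> (\<forall>v\<in>F1. w' v = w0 v)" using nb_det[OF sE F1(1)] by blast
    obtain Gs2 where G2: "finite Gs2" "\<forall>x0' y' w'. (x0', y', w') \<in> E \<longrightarrow>
           (\<forall>g\<in>Gs2. iota (x0', y', w') g = iota (x1, y1, w1) g) \<longrightarrow>
           x0' = x1 \<and> y' = y1 \<and> (\<forall>v\<in>F2. w' v = w1 v)" using nb_det[OF tE F2(1)] by blast
    let ?Bs = "(\<lambda>x. (SB, beta x)) ` verts A"
    let ?O1 = "{u \<in> free_sg V X. \<forall>g\<in>Gs1 \<union> ?Bs. u g = iota (x0, y0, w0) g}"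
    let ?O2 = "{u \<in> free_sg V X. \<forall>g\<in>Gs2 \<union> ?Bs. u g = iota (x1, y1, w1) g}"
    have o1: "openin (free_sg_top V X) ?O1" by (rule sgtop_open_nb) (use G1(1) finA in simp)
    have o2: "openin (free_sg_top V X) ?O2" by (rule sgtop_open_nb) (use G2(1) finA in simp)
    have "openin (prod_topology (free_sg_top V X) (free_sg_top V X)) (?O1 \<times> ?O2)"
      using o1 o2 by (simp add: openin_prod_Times_iff)
    then have img: "openin (free_sg_top V X) (?m ` (?O1 \<times> ?O2))"
      using H unfolding free_sg_mult_open_def open_map_def by blast
    have qE: "q \<in> E" using mul_in[OF sE tE xy] st(2) s t by simp
    obtain xq yq wq where q: "q = (xq, yq, wq)" by (cases q) auto
    have iq: "iota q = ?m (iota (x0, y0, w0), iota (x1, y1, w1))"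
      using iota_mul[OF sE tE] st(2) s t by simp
    have i1: "iota (x0, y0, w0) \<in> ?O1" using iota_in[OF sE] by simp
    have i2: "iota (x1, y1, w1) \<in> ?O2" using iota_in[OF tE] by simp
    have mem: "(iota (x0, y0, w0), iota (x1, y1, w1)) \<in> ?O1 \<times> ?O2" using i1 i2 by (rule SigmaI)
    have iqm: "iota q \<in> ?m ` (?O1 \<times> ?O2)" by (rule rev_image_eqI[of _ _ _ ?m, OF mem iq])
    obtain H' where H'0: "finite H' \<and> {u \<in> free_sg V X. \<forall>h\<in>H'. u h = iota q h} \<subseteq> ?m ` (?O1 \<times> ?O2)"
      using sgtop_nb[OF img iqm] by (elim exE)
    note H' = H'0[THEN conjunct1] H'0[THEN conjunct2]
    let ?F' = "(\<lambda>h. (sg_as_sgd (fst h), (\<lambda>_. 0) :: 'v \<Rightarrow> nat, snd h)) ` H'"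
    show "\<exists>T. openin (free_sgd_top G A) T \<and> q \<in> T \<and> T \<subseteq> ?f ` U"
    proof (intro exI[of _ "NB G A q ?F'"] conjI)
      show "openin (free_sgd_top G A) (NB G A q ?F')" by (rule sgdtop_open_nb) (use H'(1) in simp)
      show "q \<in> NB G A q ?F'" using qE unfolding NB_def by simp
      show "NB G A q ?F' \<subseteq> ?f ` U"
      proof
        fix z assume zN: "z \<in> NB G A q ?F'"
        obtain xz yz wz where z: "z = (xz, yz, wz)" by (cases z) auto
        have "z \<in> E" using zN unfolding NB_def by blast
        then have zE: "(xz, yz, wz) \<in> E" using z by simp
        have "\<forall>h\<in>H'. iota z h = iota q h" using iota_agree zN z q by blast
        then have "iota z \<in> ?m ` (?O1 \<times> ?O2)" using H'(2) iota_in[OF zE] z by blast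
        then obtain u w where uw: "u \<in> ?O1" "w \<in> ?O2" "iota z = free_sg_mul V X u w" by auto
        have ub: "\<forall>x\<in>verts A. u (SB, beta x) = iota (x0, y0, w0) (SB, beta x)" using uw(1) by blast
        have wb: "\<forall>x\<in>verts A. w (SB, beta x) = iota (x1, y1, w1) (SB, beta x)" using uw(2) by blast
        let ?s' = "(x0, y0, \<lambda>v. lw v x0 y0 u)"
        let ?t' = "(x1, y1, \<lambda>v. lw v x1 y1 w)"
        have ls: "?s' \<in> E" "iota ?s' = u" using lift[OF sE _ ub] uw(1) by auto
        have lt: "?t' \<in> E" "iota ?t' = w" using lift[OF tE _ wb] uw(2) by auto
        have "\<forall>v\<in>F1. lw v x0 y0 u = w0 v" using G1(2) ls uw(1) by auto
        then have "?s' \<in> NB G A s F1" using ls(1) s unfolding NB_def by simp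
        then have s'N: "?s' \<in> N1" using F1(2) by blast
        have "\<forall>v\<in>F2. lw v x1 y1 w = w1 v" using G2(2) lt uw(2) by auto
        then have "?t' \<in> NB G A t F2" using lt(1) t unfolding NB_def by simp
        then have t'N: "?t' \<in> N2" using F2(2) by blast
        have "(?s', ?t') \<in> W" using s'N t'N N(5) by blast
        moreover have "(?s', ?t') \<in> free_sgd_D G A" using ls(1) lt(1) xy unfolding free_sgd_D_def by simp
        ultimately have inU: "(?s', ?t') \<in> U" using W(2) by blast
        have mE: "free_sgd_mul G A ?s' ?t' \<in> E" by (rule mul_in[OF ls(1) lt(1) xy])
        have "iota (free_sgd_mul G A ?s' ?t') = free_sg_mul V X u w"
          using iota_mul[OF ls(1) lt(1)] ls(2) lt(2) by simp
        then have eq: "iota (free_sgd_mul G A ?s' ?t') = iota (xz, yz, wz)" using uw(3) z by simp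
        obtain xm ym wm where m: "free_sgd_mul G A ?s' ?t' = (xm, ym, wm)" by (cases "free_sgd_mul G A ?s' ?t'") auto
        have "(xm, ym, wm) = (xz, yz, wz)" using iota_inj[OF zE, of xm ym wm] mE eq m by simp
        then have "z = ?f (?s', ?t')" using m z by simp
        then show "z \<in> ?f ` U" using inU by blast
      qed
    qed
  qed
qed

end

theorem mainTheorem5:
  fixes A :: "('v, 'e) sgraph" and V :: "nat sg set"
  assumes "is_graph A" and "finite (verts A)"
    and "sg_pvar V" and "contains_B2 V"
    and "free_sg_mult_open V (edges A)"
  shows "free_sgd_mult_open (gV V) A"
proof -
  interpret mt A V using assms(1-4) by unfold_locales
  show ?thesis using main assms(5) by blast
qed


end
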